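(* Let $(H,\prec)$ be an elementary POP-graph with exactly one internal vertex, and let $(G_1,\prec_1),(G_2,\prec_2)$ be POP-graphs. (1) If the compositions are defined and $(H,\prec)\circ(G_1,\prec_1)=(H,\prec)\circ(G_2,\prec_2)$, then $(G_1,\prec_1)=(G_2,\prec_2)$. (2) If the compositions are defined and $(G_1,\prec_1)\circ(H,\prec)=(G_2,\prec_2)\circ(H,\prec)$, then $(G_1,\prec_1)=(G_2,\prec_2)$.
   Context: A progressive graph is a finite directed acyclic graph (parallel edges allowed) in which every source and every sink has degree one; degree-one vertices are boundary vertices, the others internal. It is elementary if each connected component has at most one internal vertex. An input edge is an edge whose initial vertex is a boundary vertex; an output edge one whose terminal vertex is a boundary vertex. For edges write $e\to e'$ if $e\neq e'$ and there is a directed path whose first edge is $e$ and last edge is $e'$. A planar order on $G$ is a linear order $\prec$ on $E(G)$ such that (P1) $e_1\to e_2$ implies $e_1\prec e_2$; (P2) if $e_1\prec e_2\prec e_3$ and $e_1\to e_3$ then $e_1\to e_2$ or $e_2\to e_3$. A POP-graph is a progressive graph with a planar order. Equality of POP-graphs means isomorphism: bijections of vertices and edges preserving incidence, direction and the planar orders. Composition: let $(G_1,\prec_1)$, $(G_2,\prec_2)$ be POP-graphs, $G_1$ with output edges $o_1\prec_1\cdots\prec_1 o_n$ and $G_2$ with input edges $i_1\prec_2\cdots\prec_2 i_n$ (composition is defined when these numbers agree). $G_2\circ G_1$ is obtained from $G_1\sqcup G_2$ by deleting the sinks of $G_1$, the sources of $G_2$ and the edges $o_k,i_k$, and adding for each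 $k$ a new edge $\overline{e_k}$ from the initial vertex of $o_k$ to the terminal vertex of $i_k$. With $Q_1=\{e\in E(G_1): e\prec_1 o_1\}$, $Q_k=\{e: o_{k-1}\prec_1 e\prec_1 o_k\}$, $P_k=\{e\in E(G_2): i_k\prec_2 e\prec_2 i_{k+1}\}$ ($k<n$), $P_n=\{e: i_n\prec_2 e\}$, the order $\prec_2\circ\prec_1$ lists $Q_1,\{\overline{e_1}\},P_1,\dots,Q_n,\{\overline{e_n}\},P_n$ consecutively, each $Q_k$ ordered by $\prec_1$, each $P_k$ by $\prec_2$; $(G_2,\prec_2)\circ(G_1,\prec_1):=(G_2\circ G_1,\prec_2\circ\prec_1)$. *)

theory Defs
  imports Main
begin

record ('v,'e) pgraph =
  pg_verts :: "'v set"
  pg_edges :: "'e set"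
  pg_tail  :: "'e \<Rightarrow> 'v"
  pg_head  :: "'e \<Rightarrow> 'v"
  pg_ord   :: "('e \<times> 'e) set"

definition indeg :: "('v,'e) pgraph \<Rightarrow> 'v \<Rightarrow> nat" where
  "indeg G v = card {e \<in> pg_edges G. pg_head G e = v}"

definition outdeg :: "('v,'e) pgraph \<Rightarrow> 'v \<Rightarrow> nat" where
  "outdeg G v = card {e \<in> pg_edges G. pg_tail G e = v}"

definition deg :: "('v,'e) pgraph \<Rightarrow> 'v \<Rightarrow> nat" where
  "deg G v = indeg G v + outdeg G v"

definition vrel :: "('v,'e) pgraph \<Rightarrow> ('v \<times> 'v) set" where
  "vrel G = {(pg_tail G e, pg_head G e) | e. e \<in> pg_edges G}"

definition is_source :: "('v,'e) pgraph \<Rightarrow> 'v \<Rightarrow> bool" where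
  "is_source G v \<longleftrightarrow> v \<in> pg_verts G \<and> indeg G v = 0"

definition is_sink :: "('v,'e) pgraph \<Rightarrow> 'v \<Rightarrow> bool" where
  "is_sink G v \<longleftrightarrow> v \<in> pg_verts G \<and> outdeg G v = 0"

definition boundary :: "('v,'e) pgraph \<Rightarrow> 'v \<Rightarrow> bool" where
  "boundary G v \<longleftrightarrow> v \<in> pg_verts G \<and> deg G v = 1"

definition internal :: "('v,'e) pgraph \<Rightarrow> 'v \<Rightarrow> bool" where
  "internal G v \<longleftrightarrow> v \<in> pg_verts G \<and> deg G v \<noteq> 1"

definition progressive :: "('v,'e) pgraph \<Rightarrow> bool" where
  "progressive G \<longleftrightarrow>
     finite (pg_verts G) \<and> finite (pg_edges G) \<and>
     (\<forall>e \<in> pg_edges G. pg_tail G e \<in> pg_verts G \<and> pg_head G e \<in> pg_verts G) \<and>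
     acyclic (vrel G) \<and>
     (\<forall>v. (is_source G v \<or> is_sink G v) \<longrightarrow> deg G v = 1)"

definition elementary :: "('v,'e) pgraph \<Rightarrow> bool" where
  "elementary G \<longleftrightarrow>
     (\<forall>u v. internal G u \<and> internal G v \<and> (u, v) \<in> (vrel G \<union> (vrel G)\<inverse>)\<^sup>* \<longrightarrow> u = v)"

definition input_edges :: "('v,'e) pgraph \<Rightarrow> 'e set" where
  "input_edges G = {e \<in> pg_edges G. boundary G (pg_tail G e)}"

definition output_edges :: "('v,'e) pgraph \<Rightarrow> 'e set" where
  "output_edges G = {e \<in> pg_edges G. boundary G (pg_head G e)}"

definition esucc :: "('v,'e) pgraph \<Rightarrow> ('e \<times> 'e) set" where
  "esucc G = {(e, e'). e \<in> pg_edges G \<and> e' \<in> pg_edges G \<and> pg_head G e = pg_tail G e'}"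

definition reach :: "('v,'e) pgraph \<Rightarrow> 'e \<Rightarrow> 'e \<Rightarrow> bool" where
  "reach G e e' \<longleftrightarrow> e \<noteq> e' \<and> (e, e') \<in> (esucc G)\<^sup>*"

definition planar_order :: "('v,'e) pgraph \<Rightarrow> bool" where
  "planar_order G \<longleftrightarrow>
     pg_ord G \<subseteq> pg_edges G \<times> pg_edges G \<and>
     trans (pg_ord G) \<and> irrefl (pg_ord G) \<and> total_on (pg_edges G) (pg_ord G) \<and>
     (\<forall>e1 e2. reach G e1 e2 \<longrightarrow> (e1, e2) \<in> pg_ord G) \<and>
     (\<forall>e1 e2 e3. (e1, e2) \<in> pg_ord G \<and> (e2, e3) \<in> pg_ord G \<and> reach G e1 e3
        \<longrightarrow> reach G e1 e2 \<or> reach G e2 e3)"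

definition pop :: "('v,'e) pgraph \<Rightarrow> bool" where
  "pop G \<longleftrightarrow> progressive G \<and> planar_order G"

text \<open>Equality of POP-graphs = isomorphism preserving incidence, direction and order.\<close>
definition pop_iso :: "('v,'e) pgraph \<Rightarrow> ('w,'f) pgraph \<Rightarrow> bool" where
  "pop_iso G G' \<longleftrightarrow> (\<exists>f g.
     bij_betw f (pg_verts G) (pg_verts G') \<and> bij_betw g (pg_edges G) (pg_edges G') \<and>
     (\<forall>e \<in> pg_edges G. pg_tail G' (g e) = f (pg_tail G e) \<and> pg_head G' (g e) = f (pg_head G e)) \<and>
     (\<forall>e1 \<in> pg_edges G. \<forall>e2 \<in> pg_edges G. (e1, e2) \<in> pg_ord G \<longleftrightarrow> (g e1, g e2) \<in> pg_ord G'))"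

definition nbefore :: "('v,'e) pgraph \<Rightarrow> 'e set \<Rightarrow> 'e \<Rightarrow> nat" where
  "nbefore G S e = card {x \<in> S. (x, e) \<in> pg_ord G}"

definition comp_defined :: "('v2,'e2) pgraph \<Rightarrow> ('v1,'e1) pgraph \<Rightarrow> bool" where
  "comp_defined G2 G1 \<longleftrightarrow> card (output_edges G1) = card (input_edges G2)"

definition match_in :: "('v2,'e2) pgraph \<Rightarrow> ('v1,'e1) pgraph \<Rightarrow> 'e1 \<Rightarrow> 'e2" where
  "match_in G2 G1 oe = (THE i. i \<in> input_edges G2 \<and>
       nbefore G2 (input_edges G2) i = nbefore G1 (output_edges G1) oe)"

text \<open>Vertices and edges of G1 are tagged Inl, those of G2 Inr;
  the new edge joining o_k and i_k is represented by Inl o_k.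
  Order key: Q_k (k-1 outputs before) \<mapsto> (k-1,0); e_k-bar \<mapsto> (k-1,1);
  P_k (k inputs at or before, i.e. k inputs strictly before) \<mapsto> (k-1,2);
  ties are broken by the original orders.\<close>
definition comp_key :: "('v2,'e2) pgraph \<Rightarrow> ('v1,'e1) pgraph \<Rightarrow> 'e1 + 'e2 \<Rightarrow> nat \<times> nat" where
  "comp_key G2 G1 x = (case x of
      Inl e \<Rightarrow> (nbefore G1 (output_edges G1) e, if e \<in> output_edges G1 then 1 else 0)
    | Inr e \<Rightarrow> (nbefore G2 (input_edges G2) e - 1, 2))"

definition comp_side_ord :: "('v2,'e2) pgraph \<Rightarrow> ('v1,'e1) pgraph \<Rightarrow> 'e1 + 'e2 \<Rightarrow> 'e1 + 'e2 \<Rightarrow> bool" where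
  "comp_side_ord G2 G1 x y = (case (x, y) of
      (Inl a, Inl b) \<Rightarrow> (a, b) \<in> pg_ord G1
    | (Inr a, Inr b) \<Rightarrow> (a, b) \<in> pg_ord G2
    | _ \<Rightarrow> False)"

definition comp :: "('v2,'e2) pgraph \<Rightarrow> ('v1,'e1) pgraph \<Rightarrow> ('v1 + 'v2, 'e1 + 'e2) pgraph" where
  "comp G2 G1 = (let E = Inl ` pg_edges G1 \<union> Inr ` (pg_edges G2 - input_edges G2) in
    \<lparr> pg_verts = Inl ` {v \<in> pg_verts G1. \<not> is_sink G1 v} \<union> Inr ` {v \<in> pg_verts G2. \<not> is_source G2 v},
      pg_edges = E,
      pg_tail = (\<lambda>x. case x of Inl e \<Rightarrow> Inl (pg_tail G1 e) | Inr e \<Rightarrow> Inr (pg_tail G2 e)),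
      pg_head = (\<lambda>x. case x of
                   Inl e \<Rightarrow> (if e \<in> output_edges G1 then Inr (pg_head G2 (match_in G2 G1 e))
                             else Inl (pg_head G1 e))
                 | Inr e \<Rightarrow> Inr (pg_head G2 e)),
      pg_ord = {(x, y). x \<in> E \<and> y \<in> E \<and>
                 (fst (comp_key G2 G1 x) < fst (comp_key G2 G1 y) \<or>
                  (fst (comp_key G2 G1 x) = fst (comp_key G2 G1 y) \<and>
                   snd (comp_key G2 G1 x) < snd (comp_key G2 G1 y)) \<or>
                  (comp_key G2 G1 x = comp_key G2 G1 y \<and> comp_side_ord G2 G1 x y))} \<rparr>)"

end

theory Submission
  imports Defs
begin


section \<open>Basic facts on pop graphs\<close>

lemma pop_fin: "pop G \<Longrightarrow> finite (pg_edges G)" "pop G \<Longrightarrow> finite (pg_verts G)"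
  by (auto simp: pop_def progressive_def)

lemma pop_tail: "pop G \<Longrightarrow> e \<in> pg_edges G \<Longrightarrow> pg_tail G e \<in> pg_verts G"
  and pop_head: "pop G \<Longrightarrow> e \<in> pg_edges G \<Longrightarrow> pg_head G e \<in> pg_verts G"
  by (auto simp: pop_def progressive_def)

lemma pop_noloop: "pop G \<Longrightarrow> e \<in> pg_edges G \<Longrightarrow> pg_tail G e \<noteq> pg_head G e"
proof
  assume p: "pop G" and e: "e \<in> pg_edges G" and eq: "pg_tail G e = pg_head G e"
  have "(pg_tail G e, pg_tail G e) \<in> vrel G" using e eq unfolding vrel_def by force
  then have "(pg_tail G e, pg_tail G e) \<in> (vrel G)\<^sup>+" by blast
  with p show False by (auto simp: pop_def progressive_def acyclic_def)
qed

lemma indeg0: "pop G \<Longrightarrow> indeg G v = 0 \<longleftrightarrow> \<not>(\<exists>e\<in>pg_edges G. pg_head G e = v)"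
proof -
  assume p: "pop G"
  have "finite {e \<in> pg_edges G. pg_head G e = v}" using pop_fin[OF p] by simp
  then show ?thesis unfolding indeg_def by (simp add: card_eq_0_iff) blast
qed

lemma outdeg0: "pop G \<Longrightarrow> outdeg G v = 0 \<longleftrightarrow> \<not>(\<exists>e\<in>pg_edges G. pg_tail G e = v)"
proof -
  assume p: "pop G"
  have "finite {e \<in> pg_edges G. pg_tail G e = v}" using pop_fin[OF p] by simp
  then show ?thesis unfolding outdeg_def by (simp add: card_eq_0_iff) blast
qed

lemma no_in_boundary:
  assumes "pop G" "v \<in> pg_verts G" "\<not>(\<exists>e\<in>pg_edges G. pg_head G e = v)"
  shows "boundary G v"
proof -
  have "is_source G v" using assms indeg0[of G v] by (simp add: is_source_def)
  then show ?thesis using assms(1,2) by (simp add: pop_def progressive_def boundary_def)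
qed

lemma no_out_boundary:
  assumes "pop G" "v \<in> pg_verts G" "\<not>(\<exists>e\<in>pg_edges G. pg_tail G e = v)"
  shows "boundary G v"
proof -
  have "is_sink G v" using assms outdeg0[of G v] by (simp add: is_sink_def)
  then show ?thesis using assms(1,2) by (simp add: pop_def progressive_def boundary_def)
qed

lemma boundary_in_no_out:
  assumes "pop G" "boundary G v" "e \<in> pg_edges G" "pg_head G e = v"
  shows "\<not>(\<exists>e'\<in>pg_edges G. pg_tail G e' = v)"
proof -
  have "\<exists>e\<in>pg_edges G. pg_head G e = v" using assms(3,4) by blast
  then have "indeg G v \<noteq> 0" using indeg0[OF assms(1), of v] by blast
  then have "outdeg G v = 0" using assms(2) unfolding boundary_def deg_def by linarith
  then show ?thesis using outdeg0[OF assms(1)] by blast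
qed

lemma boundary_out_no_in:
  assumes "pop G" "boundary G v" "e \<in> pg_edges G" "pg_tail G e = v"
  shows "\<not>(\<exists>e'\<in>pg_edges G. pg_head G e' = v)"
proof -
  have "\<exists>e\<in>pg_edges G. pg_tail G e = v" using assms(3,4) by blast
  then have "outdeg G v \<noteq> 0" using outdeg0[OF assms(1), of v] by blast
  then have "indeg G v = 0" using assms(2) unfolding boundary_def deg_def by linarith
  then show ?thesis using indeg0[OF assms(1)] by blast
qed

lemma nonoutput_has_out:
  assumes "pop G" "e \<in> pg_edges G" "e \<notin> output_edges G"
  shows "\<exists>e'\<in>pg_edges G. pg_tail G e' = pg_head G e"
proof (rule ccontr)
  assume "\<not> ?thesis"
  then have "boundary G (pg_head G e)" using no_out_boundary[OF assms(1) pop_head[OF assms(1,2)]] by blast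
  then show False using assms(2,3) by (simp add: output_edges_def)
qed

lemma noninput_has_in:
  assumes "pop G" "e \<in> pg_edges G" "e \<notin> input_edges G"
  shows "\<exists>a\<in>pg_edges G. pg_head G a = pg_tail G e"
proof (rule ccontr)
  assume "\<not> ?thesis"
  then have "boundary G (pg_tail G e)" using no_in_boundary[OF assms(1) pop_tail[OF assms(1,2)]] by blast
  then show False using assms(2,3) by (simp add: input_edges_def)
qed

lemma output_no_out:
  assumes "pop G" "oe \<in> output_edges G"
  shows "\<not>(\<exists>e'\<in>pg_edges G. pg_tail G e' = pg_head G oe)"
proof -
  have "boundary G (pg_head G oe)" "oe \<in> pg_edges G" using assms(2) by (auto simp: output_edges_def)
  then show ?thesis using boundary_in_no_out[OF assms(1)] by blast
qed

lemma input_no_in: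
  assumes "pop G" "i \<in> input_edges G"
  shows "\<not>(\<exists>e'\<in>pg_edges G. pg_head G e' = pg_tail G i)"
proof -
  have "boundary G (pg_tail G i)" "i \<in> pg_edges G" using assms(2) by (auto simp: input_edges_def)
  then show ?thesis using boundary_out_no_in[OF assms(1)] by blast
qed

lemma pop_lin:
  assumes "pop G"
  shows "pg_ord G \<subseteq> pg_edges G \<times> pg_edges G" "trans (pg_ord G)" "irrefl (pg_ord G)"
    "total_on (pg_edges G) (pg_ord G)"
  using assms by (auto simp: pop_def planar_order_def)

lemma pop_step:
  assumes "pop G" "a \<in> pg_edges G" "b \<in> pg_edges G" "pg_head G a = pg_tail G b"
  shows "(a, b) \<in> pg_ord G"
proof -
  have "a \<noteq> b" using assms pop_noloop[of G b] by auto
  moreover have "(a, b) \<in> esucc G" using assms by (auto simp: esucc_def)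
  ultimately have "reach G a b" by (auto simp: reach_def)
  then show ?thesis using assms(1) by (auto simp: pop_def planar_order_def)
qed

section \<open>Ranks in strict linear orders\<close>

definition nb :: "('e \<times> 'e) set \<Rightarrow> 'e set \<Rightarrow> 'e \<Rightarrow> nat" where
  "nb r S x = card {y \<in> S. (y, x) \<in> r}"

lemma nbefore_nb: "nbefore G S x = nb (pg_ord G) S x"
  by (simp add: nbefore_def nb_def)

lemma nb_mono:
  assumes "finite S" "trans r" "(a, b) \<in> r"
  shows "nb r S a \<le> nb r S b"
  unfolding nb_def
proof (rule card_mono)
  show "finite {y \<in> S. (y, b) \<in> r}" using assms(1) by simp
  show "{y \<in> S. (y, a) \<in> r} \<subseteq> {y \<in> S. (y, b) \<in> r}"
  proof
    fix y assume "y \<in> {y \<in> S. (y, a) \<in> r}"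
    then have "y \<in> S" "(y, a) \<in> r" by auto
    moreover have "(y, b) \<in> r" using transD[OF assms(2) \<open>(y, a) \<in> r\<close> assms(3)] .
    ultimately show "y \<in> {y \<in> S. (y, b) \<in> r}" by simp
  qed
qed

lemma nb_strict:
  assumes "finite S" "trans r" "irrefl r" "(a, b) \<in> r" "a \<in> S"
  shows "nb r S a < nb r S b"
  unfolding nb_def
proof (rule psubset_card_mono)
  show "finite {y \<in> S. (y, b) \<in> r}" using assms by simp
  have sub: "{y \<in> S. (y, a) \<in> r} \<subseteq> {y \<in> S. (y, b) \<in> r}"
  proof
    fix y assume "y \<in> {y \<in> S. (y, a) \<in> r}"
    then have "y \<in> S" "(y, a) \<in> r" by auto
    moreover have "(y, b) \<in> r" using transD[OF assms(2) \<open>(y, a) \<in> r\<close> assms(4)] .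
    ultimately show "y \<in> {y \<in> S. (y, b) \<in> r}" by simp
  qed
  have "a \<in> {y \<in> S. (y, b) \<in> r}" using assms(4,5) by simp
  moreover have "a \<notin> {y \<in> S. (y, a) \<in> r}" using assms(3) by (simp add: irrefl_def)
  ultimately show "{y \<in> S. (y, a) \<in> r} \<subset> {y \<in> S. (y, b) \<in> r}" using sub by blast
qed

lemma nb_less_iff:
  assumes "finite S" "trans r" "irrefl r" "total_on E r" "S \<subseteq> E" "i \<in> S" "b \<in> E"
  shows "nb r S i < nb r S b \<longleftrightarrow> (i, b) \<in> r"
proof
  assume "(i, b) \<in> r" then show "nb r S i < nb r S b" using nb_strict[OF assms(1-3) _ assms(6)] by blast
next
  assume l: "nb r S i < nb r S b"
  show "(i, b) \<in> r"
  proof (rule ccontr)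
    assume n: "(i, b) \<notin> r"
    have "i \<noteq> b" using l by auto
    moreover have "i \<in> E" using assms(5,6) by blast
    ultimately have "(b, i) \<in> r" using assms(4,7) n unfolding total_on_def by blast
    then have "nb r S b \<le> nb r S i" using nb_mono[OF assms(1,2)] by blast
    with l show False by simp
  qed
qed

lemma nb_inj:
  assumes "finite S" "trans r" "irrefl r" "total_on E r" "S \<subseteq> E" "i \<in> S" "j \<in> S"
    "nb r S i = nb r S j"
  shows "i = j"
proof (rule ccontr)
  assume "i \<noteq> j"
  moreover have "i \<in> E" "j \<in> E" using assms(5,6,7) by blast+
  ultimately have "(i, j) \<in> r \<or> (j, i) \<in> r" using assms(4) unfolding total_on_def by blast
  then show False
  proof
    assume "(i, j) \<in> r" then have "nb r S i < nb r S j" using nb_strict[OF assms(1-3)] assms(6) by blast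
    then show False using assms(8) by simp
  next
    assume "(j, i) \<in> r" then have "nb r S j < nb r S i" using nb_strict[OF assms(1-3)] assms(7) by blast
    then show False using assms(8) by simp
  qed
qed

lemma nb_bound:
  assumes "finite S" "irrefl r" "i \<in> S"
  shows "nb r S i < card S"
  unfolding nb_def
proof (rule psubset_card_mono)
  show "finite S" by fact
  have "i \<notin> {y \<in> S. (y, i) \<in> r}" using assms(2) by (simp add: irrefl_def)
  then show "{y \<in> S. (y, i) \<in> r} \<subset> S" using assms(3) by blast
qed

lemma nb_bij:
  assumes "finite S" "trans r" "irrefl r" "total_on E r" "S \<subseteq> E"
  shows "bij_betw (nb r S) S {..<card S}"
proof -
  have inj: "inj_on (nb r S) S" using nb_inj[OF assms] unfolding inj_on_def by blast
  have sub: "nb r S ` S \<subseteq> {..<card S}" using nb_bound[OF assms(1,3)] by auto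
  have "card (nb r S ` S) = card {..<card S}" using card_image[OF inj] by simp
  then have "nb r S ` S = {..<card S}" using card_subset_eq[OF _ sub] by simp
  with inj show ?thesis by (simp add: bij_betw_def)
qed

lemma nb_transfer:
  assumes "inj_on g X" "S \<subseteq> X" "x \<in> X" "S' = g ` S"
    "\<And>y. y \<in> S \<Longrightarrow> (y, x) \<in> r1 \<longleftrightarrow> (g y, g x) \<in> r2"
  shows "nb r2 S' (g x) = nb r1 S x"
proof -
  have "{y' \<in> S'. (y', g x) \<in> r2} = g ` {y \<in> S. (y, x) \<in> r1}"
  proof
    show "{y' \<in> S'. (y', g x) \<in> r2} \<subseteq> g ` {y \<in> S. (y, x) \<in> r1}"
      using assms(4,5) by blast
    show "g ` {y \<in> S. (y, x) \<in> r1} \<subseteq> {y' \<in> S'. (y', g x) \<in> r2}"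
      using assms(4,5) by blast
  qed
  moreover have "inj_on g {y \<in> S. (y, x) \<in> r1}" by (rule inj_on_subset[OF assms(1)]) (use assms(2) in auto)
  ultimately show ?thesis unfolding nb_def by (simp add: card_image)
qed


lemma pop_trans: "pop G \<Longrightarrow> trans (pg_ord G)" and pop_irrefl: "pop G \<Longrightarrow> irrefl (pg_ord G)"
  and pop_total: "pop G \<Longrightarrow> total_on (pg_edges G) (pg_ord G)"
  and pop_ordsub: "pop G \<Longrightarrow> (a, b) \<in> pg_ord G \<Longrightarrow> a \<in> pg_edges G \<and> b \<in> pg_edges G"
  using pop_lin[of G] by auto

lemma pop_asym: "pop G \<Longrightarrow> (a, b) \<in> pg_ord G \<Longrightarrow> (b, a) \<notin> pg_ord G"
  using pop_trans[of G] pop_irrefl[of G] unfolding trans_def irrefl_def by blast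

lemma pop_tot: "pop G \<Longrightarrow> a \<in> pg_edges G \<Longrightarrow> b \<in> pg_edges G \<Longrightarrow> a \<noteq> b \<Longrightarrow>
   (a, b) \<in> pg_ord G \<or> (b, a) \<in> pg_ord G"
  using pop_total[of G] unfolding total_on_def by blast

lemma out_sub: "output_edges G \<subseteq> pg_edges G" and in_sub: "input_edges G \<subseteq> pg_edges G"
  by (auto simp: output_edges_def input_edges_def)

lemma fin_out: "pop G \<Longrightarrow> finite (output_edges G)" and fin_in: "pop G \<Longrightarrow> finite (input_edges G)"
  using pop_fin(1)[of G] finite_subset[OF out_sub] finite_subset[OF in_sub] by blast+

lemma first_input:
  assumes p: "pop G" and b: "b \<in> pg_edges G" "b \<notin> input_edges G"
  shows "\<exists>i\<in>input_edges G. (i, b) \<in> pg_ord G"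
proof -
  let ?r = "pg_ord G" and ?E = "pg_edges G"
  obtain m where m: "m \<in> ?E" "\<And>y. y \<in> ?E \<Longrightarrow> nb ?r ?E m \<le> nb ?r ?E y"
    using ex_has_least_nat[of "\<lambda>x. x \<in> ?E" b "nb ?r ?E"] b by blast
  have mmin: "(y, m) \<notin> ?r" if "y \<in> ?E" for y
  proof
    assume "(y, m) \<in> ?r"
    then have "nb ?r ?E y < nb ?r ?E m" using nb_strict[OF pop_fin(1)[OF p] pop_trans[OF p] pop_irrefl[OF p]] that by blast
    with m(2)[OF that] show False by simp
  qed
  have mi: "m \<in> input_edges G"
  proof (rule ccontr)
    assume "m \<notin> input_edges G"
    then obtain a where a: "a \<in> ?E" "pg_head G a = pg_tail G m" using noninput_has_in[OF p m(1)] by blast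
    have "(a, m) \<in> ?r" using pop_step[OF p a(1) m(1) a(2)] .
    with mmin[OF a(1)] show False by simp
  qed
  then have "m \<noteq> b" using b by blast
  then have "(m, b) \<in> ?r" using pop_tot[OF p m(1) b(1)] mmin[OF b(1)] by blast
  with mi show ?thesis by blast
qed

lemma nb_pos:
  assumes p: "pop G" and b: "b \<in> pg_edges G" "b \<notin> input_edges G"
  shows "nb (pg_ord G) (input_edges G) b \<ge> 1"
proof -
  obtain i where "i \<in> input_edges G" "(i, b) \<in> pg_ord G" using first_input[OF assms] by blast
  then have "nb (pg_ord G) (input_edges G) i < nb (pg_ord G) (input_edges G) b"
    using nb_strict[OF fin_in[OF p] pop_trans[OF p] pop_irrefl[OF p]] by blast
  then show ?thesis by simp
qed

section \<open>Composition unfolded\<close>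

definition lexless :: "nat \<times> nat \<Rightarrow> nat \<times> nat \<Rightarrow> bool" where
  "lexless p q \<longleftrightarrow> fst p < fst q \<or> (fst p = fst q \<and> snd p < snd q)"

lemma comp_edges: "pg_edges (comp B A) = Inl ` pg_edges A \<union> Inr ` (pg_edges B - input_edges B)"
  and comp_verts: "pg_verts (comp B A) = Inl ` {v \<in> pg_verts A. \<not> is_sink A v} \<union> Inr ` {v \<in> pg_verts B. \<not> is_source B v}"
  and comp_tail_l: "pg_tail (comp B A) (Inl e) = Inl (pg_tail A e)"
  and comp_tail_r: "pg_tail (comp B A) (Inr e') = Inr (pg_tail B e')"
  and comp_head_l: "pg_head (comp B A) (Inl e) = (if e \<in> output_edges A then Inr (pg_head B (match_in B A e)) else Inl (pg_head A e))"
  and comp_head_r: "pg_head (comp B A) (Inr e') = Inr (pg_head B e')"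
  by (simp_all add: comp_def Let_def)

lemma comp_ord: "(x, y) \<in> pg_ord (comp B A) \<longleftrightarrow> x \<in> pg_edges (comp B A) \<and> y \<in> pg_edges (comp B A) \<and>
   (lexless (comp_key B A x) (comp_key B A y) \<or> (comp_key B A x = comp_key B A y \<and> comp_side_ord B A x y))"
  by (simp add: comp_def Let_def lexless_def)

lemma key_l: "comp_key B A (Inl e) = (nb (pg_ord A) (output_edges A) e, if e \<in> output_edges A then 1 else 0)"
  and key_r: "comp_key B A (Inr e') = (nb (pg_ord B) (input_edges B) e' - 1, 2)"
  by (simp_all add: comp_key_def nbefore_nb)

lemma side_ll: "comp_side_ord B A (Inl a) (Inl b) \<longleftrightarrow> (a, b) \<in> pg_ord A"
  and side_rr: "comp_side_ord B A (Inr a') (Inr b') \<longleftrightarrow> (a', b') \<in> pg_ord B"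
  and side_lr: "\<not> comp_side_ord B A (Inl a) (Inr b')"
  and side_rl: "\<not> comp_side_ord B A (Inr b') (Inl a)"
  by (simp_all add: comp_side_ord_def)

lemma lex_order_iff:
  assumes tr: "trans r" and ir: "irrefl r" and tot: "total_on X r" and ab: "a \<in> X" "b \<in> X"
    and mono: "\<And>a b. a \<in> X \<Longrightarrow> b \<in> X \<Longrightarrow> (a, b) \<in> r \<Longrightarrow> lexless (k a) (k b) \<or> k a = k b"
  shows "(lexless (k a) (k b) \<or> (k a = k b \<and> (a, b) \<in> r)) \<longleftrightarrow> (a, b) \<in> r"
proof
  assume "(a, b) \<in> r" then show "lexless (k a) (k b) \<or> (k a = k b \<and> (a, b) \<in> r)" using mono[OF ab] by blast
next
  assume h: "lexless (k a) (k b) \<or> (k a = k b \<and> (a, b) \<in> r)"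
  show "(a, b) \<in> r"
  proof (rule ccontr)
    assume n: "(a, b) \<notin> r"
    then have l: "lexless (k a) (k b)" using h by blast
    then have "a \<noteq> b" by (auto simp: lexless_def)
    then have "(b, a) \<in> r" using tot ab n unfolding total_on_def by blast
    then have "lexless (k b) (k a) \<or> k b = k a" using mono[OF ab(2) ab(1)] by blast
    with l show False by (auto simp: lexless_def)
  qed
qed

locale cs =
  fixes B :: "('vb, 'eb) pgraph" and A :: "('va, 'ea) pgraph"
  assumes pA: "pop A" and pB: "pop B" and cd: "card (output_edges A) = card (input_edges B)"
begin

abbreviation "rA \<equiv> pg_ord A"
abbreviation "rB \<equiv> pg_ord B"
abbreviation "oA \<equiv> output_edges A"
abbreviation "iB \<equiv> input_edges B"
abbreviation "mu \<equiv> match_in B A"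

lemma mu_prop:
  assumes oe: "oe \<in> oA"
  shows "mu oe \<in> iB \<and> nb rB iB (mu oe) = nb rA oA oe"
proof -
  have lt: "nb rA oA oe < card iB" using nb_bound[OF fin_out[OF pA] pop_irrefl[OF pA] oe] cd by simp
  have bij: "bij_betw (nb rB iB) iB {..<card iB}"
    using nb_bij[OF fin_in[OF pB] pop_trans[OF pB] pop_irrefl[OF pB] pop_total[OF pB] in_sub] .
  have "nb rA oA oe \<in> nb rB iB ` iB" using lt bij unfolding bij_betw_def by simp
  then obtain i where i: "i \<in> iB" "nb rB iB i = nb rA oA oe" by (auto simp del: nb_def)
  have uniq: "j = i" if "j \<in> iB" "nb rB iB j = nb rA oA oe" for j
    using nb_inj[OF fin_in[OF pB] pop_trans[OF pB] pop_irrefl[OF pB] pop_total[OF pB] in_sub that(1) i(1)] that(2) i(2) by simp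
  have "mu oe = i" unfolding match_in_def nbefore_nb
  proof (rule the_equality)
    show "i \<in> iB \<and> nb rB iB i = nb rA oA oe" using i by simp
    show "j = i" if "j \<in> iB \<and> nb rB iB j = nb rA oA oe" for j using uniq that by simp
  qed
  with i show ?thesis by simp
qed

lemma mu_in: "oe \<in> oA \<Longrightarrow> mu oe \<in> iB" and mu_nb: "oe \<in> oA \<Longrightarrow> nb rB iB (mu oe) = nb rA oA oe"
  using mu_prop by blast+

lemma mu_less:
  assumes "oe \<in> oA" "oe' \<in> oA"
  shows "(mu oe, mu oe') \<in> rB \<longleftrightarrow> (oe, oe') \<in> rA"
proof -
  have m2: "mu oe' \<in> pg_edges B" using subsetD[OF in_sub mu_in[OF assms(2)]] .
  have m3: "oe' \<in> pg_edges A" using subsetD[OF out_sub assms(2)] .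
  have 1: "(mu oe, mu oe') \<in> rB \<longleftrightarrow> nb rB iB (mu oe) < nb rB iB (mu oe')"
    using nb_less_iff[OF fin_in[OF pB] pop_trans[OF pB] pop_irrefl[OF pB] pop_total[OF pB] in_sub mu_in[OF assms(1)] m2] by simp
  have 2: "nb rA oA oe < nb rA oA oe' \<longleftrightarrow> (oe, oe') \<in> rA"
    using nb_less_iff[OF fin_out[OF pA] pop_trans[OF pA] pop_irrefl[OF pA] pop_total[OF pA] out_sub assms(1) m3] by simp
  show ?thesis using 1 2 mu_nb[OF assms(1)] mu_nb[OF assms(2)] by simp
qed

lemma mu_inj: "inj_on mu oA"
proof (rule inj_onI)
  fix x y assume xy: "x \<in> oA" "y \<in> oA" "mu x = mu y"
  then have "nb rA oA x = nb rA oA y" using mu_nb by metis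
  then show "x = y" using nb_inj[OF fin_out[OF pA] pop_trans[OF pA] pop_irrefl[OF pA] pop_total[OF pA] out_sub xy(1,2)] by simp
qed

lemma mu_bij: "bij_betw mu oA iB"
proof -
  have "mu ` oA \<subseteq> iB" using mu_in by blast
  moreover have "card (mu ` oA) = card iB" using card_image[OF mu_inj] cd by simp
  ultimately have "mu ` oA = iB" by (rule card_subset_eq[OF fin_in[OF pB]])
  then show ?thesis using mu_inj by (simp add: bij_betw_def)
qed

lemma mu_surj: "i \<in> iB \<Longrightarrow> \<exists>oe\<in>oA. mu oe = i"
  using mu_bij unfolding bij_betw_def by (metis imageE)

abbreviation "K \<equiv> comp B A"

lemma ord_ll:
  assumes "a \<in> pg_edges A" "b \<in> pg_edges A"
  shows "(Inl a, Inl b) \<in> pg_ord K \<longleftrightarrow> (a, b) \<in> rA"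
proof -
  let ?k = "\<lambda>x. comp_key B A (Inl x)"
  have mono: "lexless (?k x) (?k y) \<or> ?k x = ?k y" if "x \<in> pg_edges A" "y \<in> pg_edges A" "(x, y) \<in> rA" for x y
  proof -
    have le: "nb rA oA x \<le> nb rA oA y" using nb_mono[OF fin_out[OF pA] pop_trans[OF pA] that(3)] .
    show ?thesis
    proof (cases "x \<in> oA")
      case True
      then have "nb rA oA x < nb rA oA y" using nb_strict[OF fin_out[OF pA] pop_trans[OF pA] pop_irrefl[OF pA] that(3)] by blast
      then show ?thesis by (simp add: key_l lexless_def)
    next
      case False
      then show ?thesis using le by (auto simp: key_l lexless_def)
    qed
  qed
  have "(Inl a, Inl b) \<in> pg_ord K \<longleftrightarrow> (lexless (?k a) (?k b) \<or> (?k a = ?k b \<and> (a, b) \<in> rA))"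
    using assms by (simp add: comp_ord comp_edges side_ll)
  also have "\<dots> \<longleftrightarrow> (a, b) \<in> rA"
    by (rule lex_order_iff[OF pop_trans[OF pA] pop_irrefl[OF pA] pop_total[OF pA] assms mono])
  finally show ?thesis .
qed

lemma ord_rr:
  assumes "a \<in> pg_edges B - iB" "b \<in> pg_edges B - iB"
  shows "(Inr a, Inr b) \<in> pg_ord K \<longleftrightarrow> (a, b) \<in> rB"
proof -
  let ?k = "\<lambda>x. comp_key B A (Inr x)"
  let ?X = "pg_edges B - iB"
  have mono: "lexless (?k x) (?k y) \<or> ?k x = ?k y" if "x \<in> ?X" "y \<in> ?X" "(x, y) \<in> rB" for x y
  proof -
    have le: "nb rB iB x \<le> nb rB iB y" using nb_mono[OF fin_in[OF pB] pop_trans[OF pB] that(3)] .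
    then show ?thesis by (auto simp: key_r lexless_def)
  qed
  have tot: "total_on ?X rB" using pop_total[OF pB] unfolding total_on_def by blast
  have "(Inr a, Inr b) \<in> pg_ord K \<longleftrightarrow> (lexless (?k a) (?k b) \<or> (?k a = ?k b \<and> (a, b) \<in> rB))"
    using assms by (simp add: comp_ord comp_edges side_rr)
  also have "\<dots> \<longleftrightarrow> (a, b) \<in> rB"
    by (rule lex_order_iff[OF pop_trans[OF pB] pop_irrefl[OF pB] tot assms mono])
  finally show ?thesis .
qed

lemma ord_lr:
  assumes oe: "oe \<in> oA" and b: "b \<in> pg_edges B" "b \<notin> iB"
  shows "(Inl oe, Inr b) \<in> pg_ord K \<longleftrightarrow> (mu oe, b) \<in> rB"
    and "(Inr b, Inl oe) \<in> pg_ord K \<longleftrightarrow> (b, mu oe) \<in> rB"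
proof -
  have pos: "nb rB iB b \<ge> 1" using nb_pos[OF pB b] .
  have oeE: "oe \<in> pg_edges A" using subsetD[OF out_sub oe] .
  have inK: "Inl oe \<in> pg_edges K" "Inr b \<in> pg_edges K" using oeE b by (auto simp: comp_edges)
  have less: "nb rB iB (mu oe) < nb rB iB b \<longleftrightarrow> (mu oe, b) \<in> rB"
    using nb_less_iff[OF fin_in[OF pB] pop_trans[OF pB] pop_irrefl[OF pB] pop_total[OF pB] in_sub mu_in[OF oe] b(1)] .
  have ne: "mu oe \<noteq> b" using mu_in[OF oe] b by blast
  have "(Inl oe, Inr b) \<in> pg_ord K \<longleftrightarrow> nb rA oA oe < nb rB iB b"
    using inK oe pos by (auto simp: comp_ord key_l key_r lexless_def side_lr)
  also have "\<dots> \<longleftrightarrow> (mu oe, b) \<in> rB" using less mu_nb[OF oe] by simp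
  finally show "(Inl oe, Inr b) \<in> pg_ord K \<longleftrightarrow> (mu oe, b) \<in> rB" .
  have "(Inr b, Inl oe) \<in> pg_ord K \<longleftrightarrow> \<not> (nb rA oA oe < nb rB iB b)"
    using inK oe pos by (auto simp: comp_ord key_l key_r lexless_def side_rl)
  also have "\<dots> \<longleftrightarrow> \<not> (mu oe, b) \<in> rB" using less mu_nb[OF oe] by simp
  also have "\<dots> \<longleftrightarrow> (b, mu oe) \<in> rB"
    using pop_tot[OF pB subsetD[OF in_sub mu_in[OF oe]] b(1) ne] pop_asym[OF pB] by blast
  finally show "(Inr b, Inl oe) \<in> pg_ord K \<longleftrightarrow> (b, mu oe) \<in> rB" .
qed

end


lemma outdeg0f: "finite (pg_edges G) \<Longrightarrow> outdeg G v = 0 \<longleftrightarrow> \<not>(\<exists>e\<in>pg_edges G. pg_tail G e = v)"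
proof -
  assume p: "finite (pg_edges G)"
  have "finite {e \<in> pg_edges G. pg_tail G e = v}" using p by simp
  then show ?thesis unfolding outdeg_def by (simp add: card_eq_0_iff) blast
qed

lemma indeg0f: "finite (pg_edges G) \<Longrightarrow> indeg G v = 0 \<longleftrightarrow> \<not>(\<exists>e\<in>pg_edges G. pg_head G e = v)"
proof -
  assume p: "finite (pg_edges G)"
  have "finite {e \<in> pg_edges G. pg_head G e = v}" using p by simp
  then show ?thesis unfolding indeg_def by (simp add: card_eq_0_iff) blast
qed

context cs begin

lemma K_fin: "finite (pg_edges K)"
  using pop_fin(1)[OF pA] pop_fin(1)[OF pB] by (simp add: comp_edges)

lemma K_tail_l: "e \<in> pg_edges A \<Longrightarrow> pg_tail K (Inl e) \<in> pg_verts K"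
proof -
  assume e: "e \<in> pg_edges A"
  have "\<not> is_sink A (pg_tail A e)" using e outdeg0[OF pA] by (auto simp: is_sink_def)
  then show ?thesis using pop_tail[OF pA e] by (simp add: comp_verts comp_tail_l)
qed

lemma K_tail_r: "e \<in> pg_edges B \<Longrightarrow> e \<notin> iB \<Longrightarrow> pg_tail K (Inr e) \<in> pg_verts K"
proof -
  assume e: "e \<in> pg_edges B" "e \<notin> iB"
  have "\<not> is_source B (pg_tail B e)"
  proof
    assume "is_source B (pg_tail B e)"
    then have "boundary B (pg_tail B e)" using pB by (simp add: pop_def progressive_def boundary_def is_source_def)
    with e show False by (simp add: input_edges_def)
  qed
  then show ?thesis using pop_tail[OF pB e(1)] by (simp add: comp_verts comp_tail_r)
qed

lemma notsrc_head: "e \<in> pg_edges B \<Longrightarrow> \<not> is_source B (pg_head B e)"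
  using indeg0[OF pB] by (auto simp: is_source_def)

lemma K_head_l: "e \<in> pg_edges A \<Longrightarrow> pg_head K (Inl e) \<in> pg_verts K"
proof -
  assume e: "e \<in> pg_edges A"
  show ?thesis
  proof (cases "e \<in> oA")
    case True
    have m: "mu e \<in> pg_edges B" using subsetD[OF in_sub mu_in[OF True]] .
    then show ?thesis using True pop_head[OF pB m] notsrc_head[OF m] by (simp add: comp_verts comp_head_l)
  next
    case False
    have "\<not> is_sink A (pg_head A e)"
    proof
      assume "is_sink A (pg_head A e)"
      then have "boundary A (pg_head A e)" using pA by (simp add: pop_def progressive_def boundary_def is_sink_def)
      with e False show False by (simp add: output_edges_def)
    qed
    then show ?thesis using False pop_head[OF pA e] by (simp add: comp_verts comp_head_l)
  qed
qed

lemma K_head_r: "e \<in> pg_edges B \<Longrightarrow> pg_head K (Inr e) \<in> pg_verts K"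
  using pop_head[OF pB] notsrc_head by (simp add: comp_verts comp_head_r)

lemma K_tail: "x \<in> pg_edges K \<Longrightarrow> pg_tail K x \<in> pg_verts K"
  using K_tail_l K_tail_r by (auto simp: comp_edges)

lemma K_head: "x \<in> pg_edges K \<Longrightarrow> pg_head K x \<in> pg_verts K"
  using K_head_l K_head_r by (auto simp: comp_edges)

end

locale hh =
  fixes H :: "('vh, 'eh) pgraph" and h :: 'vh
  assumes pH: "pop H" and hV: "h \<in> pg_verts H" and hnb: "\<not> boundary H h"
    and huniq: "\<And>v. v \<in> pg_verts H \<Longrightarrow> \<not> boundary H v \<Longrightarrow> v = h"
begin

lemma noninput_tail: "e \<in> pg_edges H \<Longrightarrow> e \<notin> input_edges H \<Longrightarrow> pg_tail H e = h"
  using huniq pop_tail[OF pH] by (auto simp: input_edges_def)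

lemma noninput_head: "e \<in> pg_edges H \<Longrightarrow> e \<notin> input_edges H \<Longrightarrow> pg_head H e \<noteq> h"
  using noninput_tail pop_noloop[OF pH] by metis

lemma noninput_out: "e \<in> pg_edges H \<Longrightarrow> e \<notin> input_edges H \<Longrightarrow> e \<in> output_edges H"
  using noninput_head huniq pop_head[OF pH] by (auto simp: output_edges_def)

lemma h_out: "\<exists>b\<in>pg_edges H. pg_tail H b = h"
  using no_out_boundary[OF pH hV] hnb by blast

lemma h_in: "\<exists>a\<in>pg_edges H. pg_head H a = h"
  using no_in_boundary[OF pH hV] hnb by blast

lemma tail_h_noninput: "b \<in> pg_edges H \<Longrightarrow> pg_tail H b = h \<Longrightarrow> b \<notin> input_edges H"
  using hnb by (auto simp: input_edges_def)

lemma head_h_nonoutput: "a \<in> pg_edges H \<Longrightarrow> pg_head H a = h \<Longrightarrow> a \<notin> output_edges H"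
  using hnb by (auto simp: output_edges_def)

lemma head_not_h_boundary: "a \<in> pg_edges H \<Longrightarrow> pg_head H a \<noteq> h \<Longrightarrow> a \<in> output_edges H"
  using huniq pop_head[OF pH] by (auto simp: output_edges_def)

lemma output_head_not_h: "a \<in> output_edges H \<Longrightarrow> pg_head H a \<noteq> h"
  using hnb by (auto simp: output_edges_def)

end


definition sinkE :: "('v,'e) pgraph \<Rightarrow> 'e set" where
  "sinkE G = {x \<in> pg_edges G. outdeg G (pg_head G x) = 0}"

definition srcE :: "('v,'e) pgraph \<Rightarrow> 'e set" where
  "srcE G = {x \<in> pg_edges G. indeg G (pg_tail G x) = 0}"

locale p1 = cs H G + hh H h for H :: "('vh, 'eh) pgraph" and G :: "('vg, 'eg) pgraph" and h
begin

lemma sinkE_K: "sinkE K = Inr ` (pg_edges H - input_edges H) \<union> Inl ` {oe \<in> output_edges G. pg_head H (mu oe) \<noteq> h}"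
proof -
  have "x \<in> sinkE K \<longleftrightarrow> x \<in> Inr ` (pg_edges H - input_edges H) \<union> Inl ` {oe \<in> output_edges G. pg_head H (mu oe) \<noteq> h}"
    if x: "x \<in> pg_edges K" for x
  proof -
    have "x \<in> sinkE K \<longleftrightarrow> \<not>(\<exists>e\<in>pg_edges K. pg_tail K e = pg_head K x)"
      using x outdeg0f[OF K_fin] by (simp add: sinkE_def)
    also have "\<dots> \<longleftrightarrow> x \<in> Inr ` (pg_edges H - input_edges H) \<union> Inl ` {oe \<in> output_edges G. pg_head H (mu oe) \<noteq> h}"
    proof (cases x)
      case (Inl e)
      then have e: "e \<in> pg_edges G" using x by (auto simp: comp_edges)
      show ?thesis
      proof (cases "e \<in> output_edges G")
        case True
        have m: "mu e \<in> pg_edges H" using subsetD[OF in_sub mu_in[OF True]] .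
        show ?thesis
        proof (cases "pg_head H (mu e) = h")
          case hh: True
          obtain b where b: "b \<in> pg_edges H" "pg_tail H b = h" using h_out by blast
          have "b \<notin> input_edges H" using tail_h_noninput[OF b] .
          then have "Inr b \<in> pg_edges K" "pg_tail K (Inr b) = pg_head K x"
            using b Inl True hh by (auto simp: comp_edges comp_tail_r comp_head_l)
          then show ?thesis using Inl hh by auto
        next
          case hn: False
          have "\<not>(\<exists>e'\<in>pg_edges K. pg_tail K e' = pg_head K x)"
          proof
            assume "\<exists>e'\<in>pg_edges K. pg_tail K e' = pg_head K x"
            then obtain e' where e': "e' \<in> pg_edges K" "pg_tail K e' = pg_head K x" by blast
            show False
            proof (cases e')
              case (Inl a) then show False using e' Inl True \<open>x = Inl e\<close> by (simp add: comp_tail_l comp_head_l)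
            next
              case (Inr b)
              then have b: "b \<in> pg_edges H" "b \<notin> input_edges H" using e' by (auto simp: comp_edges)
              have "pg_tail H b = pg_head H (mu e)" using e' Inr True \<open>x = Inl e\<close> by (simp add: comp_tail_r comp_head_l)
              then show False using noninput_tail[OF b] hn by simp
            qed
          qed
          then show ?thesis using Inl True hn by auto
        qed
      next
        case False
        obtain e' where e': "e' \<in> pg_edges G" "pg_tail G e' = pg_head G e" using nonoutput_has_out[OF pA e False] by blast
        then have "Inl e' \<in> pg_edges K" "pg_tail K (Inl e') = pg_head K x"
          using Inl False by (auto simp: comp_edges comp_tail_l comp_head_l)
        then show ?thesis using Inl False by auto
      qed
    next
      case (Inr b)
      then have b: "b \<in> pg_edges H" "b \<notin> input_edges H" using x by (auto simp: comp_edges)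
      have "\<not>(\<exists>e'\<in>pg_edges K. pg_tail K e' = pg_head K x)"
      proof
        assume "\<exists>e'\<in>pg_edges K. pg_tail K e' = pg_head K x"
        then obtain e' where e': "e' \<in> pg_edges K" "pg_tail K e' = pg_head K x" by blast
        show False
        proof (cases e')
          case (Inl a) then show False using e' Inr by (simp add: comp_tail_l comp_head_r)
        next
          case (Inr b')
          then have b': "b' \<in> pg_edges H" "b' \<notin> input_edges H" using e' by (auto simp: comp_edges)
          have "pg_tail H b' = pg_head H b" using e' Inr \<open>x = Inr b\<close> by (simp add: comp_tail_r comp_head_r)
          then show False using noninput_tail[OF b'] noninput_head[OF b] by simp
        qed
      qed
      then show ?thesis using Inr b by auto
    qed
    finally show ?thesis .
  qed
  moreover have "Inr ` (pg_edges H - input_edges H) \<union> Inl ` {oe \<in> output_edges G. pg_head H (mu oe) \<noteq> h} \<subseteq> pg_edges K"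
  proof -
    have "{oe \<in> output_edges G. pg_head H (mu oe) \<noteq> h} \<subseteq> pg_edges G" using out_sub[of G] by blast
    then have "Inl ` {oe \<in> output_edges G. pg_head H (mu oe) \<noteq> h} \<subseteq> Inl ` pg_edges G" by (rule image_mono)
    then have s2: "Inl ` {oe \<in> output_edges G. pg_head H (mu oe) \<noteq> h} \<subseteq> pg_edges K"
      unfolding comp_edges by (rule subset_trans[OF _ Un_upper1])
    have s1: "Inr ` (pg_edges H - input_edges H) \<subseteq> pg_edges K" unfolding comp_edges by (rule Un_upper2)
    show ?thesis by (rule Un_least[OF s1 s2])
  qed
  ultimately show ?thesis
  proof (intro set_eqI)
    fix x
    assume A: "\<And>x. x \<in> pg_edges K \<Longrightarrow> (x \<in> sinkE K) = (x \<in> Inr ` (pg_edges H - input_edges H) \<union> Inl ` {oe \<in> output_edges G. pg_head H (mu oe) \<noteq> h})"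
      and S: "Inr ` (pg_edges H - input_edges H) \<union> Inl ` {oe \<in> output_edges G. pg_head H (mu oe) \<noteq> h} \<subseteq> pg_edges K"
    have "sinkE K \<subseteq> pg_edges K" by (auto simp: sinkE_def)
    then show "(x \<in> sinkE K) = (x \<in> Inr ` (pg_edges H - input_edges H) \<union> Inl ` {oe \<in> output_edges G. pg_head H (mu oe) \<noteq> h})"
      using A[of x] S by blast
  qed
qed

definition pi :: "'eg + 'eh \<Rightarrow> 'eh" where
  "pi x = (case x of Inl oe \<Rightarrow> mu oe | Inr b \<Rightarrow> b)"

lemma pi_inj: "inj_on pi (sinkE K)"
proof (rule inj_onI)
  fix x y assume xy: "x \<in> sinkE K" "y \<in> sinkE K" "pi x = pi y"
  show "x = y"
  proof (cases x)
    case (Inl a)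
    then have a: "a \<in> output_edges G" using xy(1) by (auto simp: sinkE_K)
    show ?thesis
    proof (cases y)
      case (Inl c)
      then have "c \<in> output_edges G" using xy(2) by (auto simp: sinkE_K)
      then show ?thesis using mu_inj a xy(3) \<open>x = Inl a\<close> Inl by (simp add: pi_def inj_on_def)
    next
      case (Inr c)
      then have "c \<notin> input_edges H" using xy(2) by (auto simp: sinkE_K)
      then show ?thesis using mu_in[OF a] xy(3) \<open>x = Inl a\<close> Inr by (auto simp: pi_def)
    qed
  next
    case (Inr a)
    then have a: "a \<notin> input_edges H" using xy(1) by (auto simp: sinkE_K)
    show ?thesis
    proof (cases y)
      case (Inl c)
      then have "c \<in> output_edges G" using xy(2) by (auto simp: sinkE_K)
      then show ?thesis using mu_in a xy(3) \<open>x = Inr a\<close> Inl by (auto simp: pi_def)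
    next
      case (Inr c)
      then show ?thesis using xy(3) \<open>x = Inr a\<close> by (simp add: pi_def)
    qed
  qed
qed

lemma pi_image: "pi ` sinkE K = output_edges H"
proof
  show "pi ` sinkE K \<subseteq> output_edges H"
  proof
    fix z assume "z \<in> pi ` sinkE K"
    then obtain x where x: "x \<in> sinkE K" "z = pi x" by blast
    show "z \<in> output_edges H"
    proof (cases x)
      case (Inl a)
      then have a: "a \<in> output_edges G" "pg_head H (mu a) \<noteq> h" using x(1) by (auto simp: sinkE_K)
      have "mu a \<in> pg_edges H" using subsetD[OF in_sub mu_in[OF a(1)]] .
      then show ?thesis using head_not_h_boundary a(2) x(2) Inl by (simp add: pi_def)
    next
      case (Inr b)
      then have "b \<in> pg_edges H" "b \<notin> input_edges H" using x(1) by (auto simp: sinkE_K)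
      then show ?thesis using noninput_out x(2) Inr by (simp add: pi_def)
    qed
  qed
  show "output_edges H \<subseteq> pi ` sinkE K"
  proof
    fix z assume z: "z \<in> output_edges H"
    show "z \<in> pi ` sinkE K"
    proof (cases "z \<in> input_edges H")
      case True
      obtain oe where oe: "oe \<in> output_edges G" "mu oe = z" using mu_surj[OF True] by blast
      have "pg_head H (mu oe) \<noteq> h" using output_head_not_h z oe(2) by simp
      then have "Inl oe \<in> sinkE K" using oe(1) by (simp add: sinkE_K)
      then show ?thesis using oe(2) by (force simp: pi_def)
    next
      case False
      have "z \<in> pg_edges H" using subsetD[OF out_sub z] .
      then have "Inr z \<in> sinkE K" using False by (simp add: sinkE_K)
      then show ?thesis by (force simp: pi_def)
    qed
  qed
qed

lemma rank_T:
  assumes b: "b \<in> pg_edges H" "b \<notin> input_edges H"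
  shows "nb (pg_ord K) (sinkE K) (Inr b) = nb (pg_ord H) (output_edges H) b"
proof -
  have xT: "Inr b \<in> sinkE K" using b by (simp add: sinkE_K)
  have "nb (pg_ord H) (pi ` sinkE K) (pi (Inr b)) = nb (pg_ord K) (sinkE K) (Inr b)"
  proof (rule nb_transfer[OF pi_inj _ xT refl])
    show "sinkE K \<subseteq> sinkE K" by simp
    fix y assume y: "y \<in> sinkE K"
    show "(y, Inr b) \<in> pg_ord K \<longleftrightarrow> (pi y, pi (Inr b)) \<in> pg_ord H"
    proof (cases y)
      case (Inl a)
      then have a: "a \<in> output_edges G" using y by (auto simp: sinkE_K)
      show ?thesis using ord_lr(1)[OF a b] Inl by (simp add: pi_def)
    next
      case (Inr c)
      then have c: "c \<in> pg_edges H - input_edges H" using y by (auto simp: sinkE_K)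
      show ?thesis using ord_rr[OF c] b Inr by (simp add: pi_def)
    qed
  qed
  then show ?thesis using pi_image by (simp add: pi_def)
qed

end


locale p2 = cs G H + hh H h for H :: "('vh, 'eh) pgraph" and G :: "('vg, 'eg) pgraph" and h
begin

lemma srcE_K: "srcE K = Inl ` input_edges H"
proof -
  have "x \<in> srcE K \<longleftrightarrow> x \<in> Inl ` input_edges H" if x: "x \<in> pg_edges K" for x
  proof -
    have "x \<in> srcE K \<longleftrightarrow> \<not>(\<exists>e\<in>pg_edges K. pg_head K e = pg_tail K x)"
      using x indeg0f[OF K_fin] by (simp add: srcE_def)
    also have "\<dots> \<longleftrightarrow> x \<in> Inl ` input_edges H"
    proof (cases x)
      case (Inl e)
      then have e: "e \<in> pg_edges H" using x by (auto simp: comp_edges)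
      show ?thesis
      proof (cases "e \<in> input_edges H")
        case True
        have "\<not>(\<exists>e'\<in>pg_edges K. pg_head K e' = pg_tail K x)"
        proof
          assume "\<exists>e'\<in>pg_edges K. pg_head K e' = pg_tail K x"
          then obtain e' where e': "e' \<in> pg_edges K" "pg_head K e' = pg_tail K x" by blast
          show False
          proof (cases e')
            case (Inl a)
            then have a: "a \<in> pg_edges H" using e' by (auto simp: comp_edges)
            have "a \<notin> output_edges H \<and> pg_head H a = pg_tail H e"
              using e' Inl \<open>x = Inl e\<close> by (auto simp: comp_tail_l comp_head_l split: if_splits)
            then show False using input_no_in[OF pH True] a by blast
          next
            case (Inr b) then show False using e' \<open>x = Inl e\<close> by (simp add: comp_tail_l comp_head_r)
          qed
        qed
        then show ?thesis using Inl True by auto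
      next
        case False
        have t: "pg_tail H e = h" using noninput_tail[OF e False] .
        obtain a where a: "a \<in> pg_edges H" "pg_head H a = h" using h_in by blast
        have "a \<notin> output_edges H" using head_h_nonoutput[OF a] .
        then have "Inl a \<in> pg_edges K" "pg_head K (Inl a) = pg_tail K x"
          using a Inl t by (auto simp: comp_edges comp_tail_l comp_head_l)
        then show ?thesis using Inl False by auto
      qed
    next
      case (Inr b)
      then have b: "b \<in> pg_edges G" "b \<notin> input_edges G" using x by (auto simp: comp_edges)
      obtain a where a: "a \<in> pg_edges G" "pg_head G a = pg_tail G b" using noninput_has_in[OF pB b] by blast
      have "\<exists>e'\<in>pg_edges K. pg_head K e' = pg_tail K x"
      proof (cases "a \<in> input_edges G")
        case True
        obtain oe where oe: "oe \<in> output_edges H" "mu oe = a" using mu_surj[OF True] by blast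
        have "Inl oe \<in> pg_edges K" using subsetD[OF out_sub oe(1)] by (simp add: comp_edges)
        moreover have "pg_head K (Inl oe) = pg_tail K x" using oe a(2) Inr by (simp add: comp_head_l comp_tail_r)
        ultimately show ?thesis by blast
      next
        case False
        then have "Inr a \<in> pg_edges K" "pg_head K (Inr a) = pg_tail K x"
          using a Inr by (auto simp: comp_edges comp_head_r comp_tail_r)
        then show ?thesis by blast
      qed
      then show ?thesis using Inr by auto
    qed
    finally show ?thesis .
  qed
  moreover have "Inl ` input_edges H \<subseteq> pg_edges K" unfolding comp_edges by (rule subset_trans[OF image_mono[OF in_sub[of H]] Un_upper1])
  ultimately show ?thesis
  proof (intro set_eqI)
    fix x
    assume A: "\<And>x. x \<in> pg_edges K \<Longrightarrow> (x \<in> srcE K) = (x \<in> Inl ` input_edges H)"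
      and S: "Inl ` input_edges H \<subseteq> pg_edges K"
    have "srcE K \<subseteq> pg_edges K" by (auto simp: srcE_def)
    then show "(x \<in> srcE K) = (x \<in> Inl ` input_edges H)" using A[of x] S by blast
  qed
qed

lemma rank_S:
  assumes i: "i \<in> input_edges H"
  shows "nb (pg_ord K) (srcE K) (Inl i) = nb (pg_ord H) (input_edges H) i"
proof -
  have iE: "i \<in> pg_edges H" using subsetD[OF in_sub i] .
  have "nb (pg_ord K) (Inl ` input_edges H) (Inl i) = nb (pg_ord H) (input_edges H) i"
  proof (rule nb_transfer[of Inl "pg_edges H"])
    show "inj_on Inl (pg_edges H)" by simp
    show "input_edges H \<subseteq> pg_edges H" by (rule in_sub)
    show "i \<in> pg_edges H" by (rule iE)
    show "Inl ` input_edges H = Inl ` input_edges H" ..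
    fix y assume "y \<in> input_edges H"
    then show "(y, i) \<in> pg_ord H \<longleftrightarrow> (Inl y, Inl i) \<in> pg_ord K"
      using ord_ll[OF subsetD[OF in_sub] iE] by simp
  qed
  then show ?thesis by (simp add: srcE_K)
qed

lemma Dset: "{x \<in> pg_edges K. pg_tail K x = Inl h} = Inl ` {b \<in> pg_edges H. pg_tail H b = h}"
  by (auto simp: comp_edges comp_tail_l comp_tail_r)

lemma rank_D:
  assumes b: "b \<in> pg_edges H" "pg_tail H b = h"
  shows "nb (pg_ord K) {x \<in> pg_edges K. pg_tail K x = Inl h} (Inl b) = nb (pg_ord H) {b \<in> pg_edges H. pg_tail H b = h} b"
proof -
  have "nb (pg_ord K) (Inl ` {b \<in> pg_edges H. pg_tail H b = h}) (Inl b) = nb (pg_ord H) {b \<in> pg_edges H. pg_tail H b = h} b"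
  proof (rule nb_transfer[of Inl "pg_edges H"])
    show "inj_on Inl (pg_edges H)" by simp
    show "{b \<in> pg_edges H. pg_tail H b = h} \<subseteq> pg_edges H" by blast
    show "b \<in> pg_edges H" by (rule b(1))
    show "Inl ` {b \<in> pg_edges H. pg_tail H b = h} = Inl ` {b \<in> pg_edges H. pg_tail H b = h}" ..
    fix y assume "y \<in> {b \<in> pg_edges H. pg_tail H b = h}"
    then show "(y, b) \<in> pg_ord H \<longleftrightarrow> (Inl y, Inl b) \<in> pg_ord K"
      using ord_ll[of y b] b(1) by simp
  qed
  then show ?thesis by (simp add: Dset)
qed

end


locale isod =
  fixes K1 :: "('v1,'e1) pgraph" and K2 :: "('v2,'e2) pgraph" and f g
  assumes fb: "bij_betw f (pg_verts K1) (pg_verts K2)"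
    and gb: "bij_betw g (pg_edges K1) (pg_edges K2)"
    and gt: "\<And>e. e \<in> pg_edges K1 \<Longrightarrow> pg_tail K2 (g e) = f (pg_tail K1 e)"
    and gh: "\<And>e. e \<in> pg_edges K1 \<Longrightarrow> pg_head K2 (g e) = f (pg_head K1 e)"
    and go: "\<And>a b. a \<in> pg_edges K1 \<Longrightarrow> b \<in> pg_edges K1 \<Longrightarrow> (a, b) \<in> pg_ord K1 \<longleftrightarrow> (g a, g b) \<in> pg_ord K2"
    and t1: "\<And>e. e \<in> pg_edges K1 \<Longrightarrow> pg_tail K1 e \<in> pg_verts K1"
    and h1: "\<And>e. e \<in> pg_edges K1 \<Longrightarrow> pg_head K1 e \<in> pg_verts K1"
begin

lemma finj: "inj_on f (pg_verts K1)" and ginj: "inj_on g (pg_edges K1)"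
  and fimg: "f ` pg_verts K1 = pg_verts K2" and gimg: "g ` pg_edges K1 = pg_edges K2"
  using fb gb by (auto simp: bij_betw_def)

lemma gE: "e \<in> pg_edges K1 \<Longrightarrow> g e \<in> pg_edges K2" using gimg by blast
lemma fV: "v \<in> pg_verts K1 \<Longrightarrow> f v \<in> pg_verts K2" using fimg by blast

lemma tailset: "v \<in> pg_verts K1 \<Longrightarrow> g ` {e \<in> pg_edges K1. pg_tail K1 e = v} = {e \<in> pg_edges K2. pg_tail K2 e = f v}"
proof -
  assume v: "v \<in> pg_verts K1"
  show ?thesis
  proof
    show "g ` {e \<in> pg_edges K1. pg_tail K1 e = v} \<subseteq> {e \<in> pg_edges K2. pg_tail K2 e = f v}"
      using gE gt by auto
    show "{e \<in> pg_edges K2. pg_tail K2 e = f v} \<subseteq> g ` {e \<in> pg_edges K1. pg_tail K1 e = v}"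
    proof
      fix y assume y: "y \<in> {e \<in> pg_edges K2. pg_tail K2 e = f v}"
      then obtain x where x: "x \<in> pg_edges K1" "y = g x" using gimg by blast
      then have "f (pg_tail K1 x) = f v" using y gt by simp
      then have "pg_tail K1 x = v" using inj_onD[OF finj _ t1[OF x(1)] v] by simp
      then show "y \<in> g ` {e \<in> pg_edges K1. pg_tail K1 e = v}" using x by blast
    qed
  qed
qed

lemma headset: "v \<in> pg_verts K1 \<Longrightarrow> g ` {e \<in> pg_edges K1. pg_head K1 e = v} = {e \<in> pg_edges K2. pg_head K2 e = f v}"
proof -
  assume v: "v \<in> pg_verts K1"
  show ?thesis
  proof
    show "g ` {e \<in> pg_edges K1. pg_head K1 e = v} \<subseteq> {e \<in> pg_edges K2. pg_head K2 e = f v}"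
      using gE gh by auto
    show "{e \<in> pg_edges K2. pg_head K2 e = f v} \<subseteq> g ` {e \<in> pg_edges K1. pg_head K1 e = v}"
    proof
      fix y assume y: "y \<in> {e \<in> pg_edges K2. pg_head K2 e = f v}"
      then obtain x where x: "x \<in> pg_edges K1" "y = g x" using gimg by blast
      then have "f (pg_head K1 x) = f v" using y gh by simp
      then have "pg_head K1 x = v" using inj_onD[OF finj _ h1[OF x(1)] v] by simp
      then show "y \<in> g ` {e \<in> pg_edges K1. pg_head K1 e = v}" using x by blast
    qed
  qed
qed

lemma outdeg_eq: "v \<in> pg_verts K1 \<Longrightarrow> outdeg K2 (f v) = outdeg K1 v"
proof -
  assume v: "v \<in> pg_verts K1"
  have "inj_on g {e \<in> pg_edges K1. pg_tail K1 e = v}" by (rule inj_on_subset[OF ginj]) blast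
  then have "card (g ` {e \<in> pg_edges K1. pg_tail K1 e = v}) = card {e \<in> pg_edges K1. pg_tail K1 e = v}" by (rule card_image)
  then show ?thesis unfolding outdeg_def using tailset[OF v] by simp
qed

lemma indeg_eq: "v \<in> pg_verts K1 \<Longrightarrow> indeg K2 (f v) = indeg K1 v"
proof -
  assume v: "v \<in> pg_verts K1"
  have "inj_on g {e \<in> pg_edges K1. pg_head K1 e = v}" by (rule inj_on_subset[OF ginj]) blast
  then have "card (g ` {e \<in> pg_edges K1. pg_head K1 e = v}) = card {e \<in> pg_edges K1. pg_head K1 e = v}" by (rule card_image)
  then show ?thesis unfolding indeg_def using headset[OF v] by simp
qed

lemma sinkE_img: "g ` sinkE K1 = sinkE K2"
proof
  show "g ` sinkE K1 \<subseteq> sinkE K2"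
  proof
    fix y assume "y \<in> g ` sinkE K1"
    then obtain x where x: "x \<in> pg_edges K1" "outdeg K1 (pg_head K1 x) = 0" "y = g x" by (auto simp: sinkE_def)
    then show "y \<in> sinkE K2" using gE gh outdeg_eq[OF h1[OF x(1)]] by (simp add: sinkE_def)
  qed
  show "sinkE K2 \<subseteq> g ` sinkE K1"
  proof
    fix y assume y: "y \<in> sinkE K2"
    then obtain x where x: "x \<in> pg_edges K1" "y = g x" using gimg by (auto simp: sinkE_def)
    then have "outdeg K1 (pg_head K1 x) = 0" using y gh outdeg_eq[OF h1[OF x(1)]] by (simp add: sinkE_def)
    then show "y \<in> g ` sinkE K1" using x by (auto simp: sinkE_def)
  qed
qed

lemma srcE_img: "g ` srcE K1 = srcE K2"
proof
  show "g ` srcE K1 \<subseteq> srcE K2"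
  proof
    fix y assume "y \<in> g ` srcE K1"
    then obtain x where x: "x \<in> pg_edges K1" "indeg K1 (pg_tail K1 x) = 0" "y = g x" by (auto simp: srcE_def)
    then show "y \<in> srcE K2" using gE gt indeg_eq[OF t1[OF x(1)]] by (simp add: srcE_def)
  qed
  show "srcE K2 \<subseteq> g ` srcE K1"
  proof
    fix y assume y: "y \<in> srcE K2"
    then obtain x where x: "x \<in> pg_edges K1" "y = g x" using gimg by (auto simp: srcE_def)
    then have "indeg K1 (pg_tail K1 x) = 0" using y gt indeg_eq[OF t1[OF x(1)]] by (simp add: srcE_def)
    then show "y \<in> g ` srcE K1" using x by (auto simp: srcE_def)
  qed
qed

lemma nb_eq:
  assumes "S \<subseteq> pg_edges K1" "x \<in> pg_edges K1"
  shows "nb (pg_ord K2) (g ` S) (g x) = nb (pg_ord K1) S x"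
proof (rule nb_transfer[OF ginj assms refl])
  fix y assume "y \<in> S"
  then have "y \<in> pg_edges K1" using assms(1) by blast
  then show "(y, x) \<in> pg_ord K1 \<longleftrightarrow> (g y, g x) \<in> pg_ord K2" using go[of y x] assms(2) by simp
qed

end


lemma pop_ss_deg: "pop G \<Longrightarrow> is_source G v \<or> is_sink G v \<Longrightarrow> deg G v = 1"
  unfolding pop_def progressive_def by blast

lemma out_sink_bij:
  assumes p: "pop G"
  shows "bij_betw (pg_head G) (output_edges G) {v \<in> pg_verts G. is_sink G v}"
proof -
  have indeg1: "indeg G v = 1" if v: "v \<in> pg_verts G" "is_sink G v" for v
  proof -
    have "deg G v = 1" using pop_ss_deg[OF p] v(2) by blast
    moreover have "outdeg G v = 0" using v(2) by (simp add: is_sink_def)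
    ultimately show ?thesis by (simp add: deg_def)
  qed
  have inj: "inj_on (pg_head G) (output_edges G)"
  proof (rule inj_onI)
    fix x y assume xy: "x \<in> output_edges G" "y \<in> output_edges G" "pg_head G x = pg_head G y"
    have xE: "x \<in> pg_edges G" "y \<in> pg_edges G" using xy(1,2) by (auto simp: output_edges_def)
    let ?v = "pg_head G x"
    have "outdeg G ?v = 0" using output_no_out[OF p xy(1)] outdeg0[OF p, of ?v] by simp
    then have "is_sink G ?v" using pop_head[OF p xE(1)] by (simp add: is_sink_def)
    then have "card {e \<in> pg_edges G. pg_head G e = ?v} = 1"
      using indeg1 pop_head[OF p xE(1)] by (simp add: indeg_def)
    then obtain z where z: "{e \<in> pg_edges G. pg_head G e = ?v} = {z}" by (rule card_1_singletonE)
    have "x \<in> {e \<in> pg_edges G. pg_head G e = ?v}" "y \<in> {e \<in> pg_edges G. pg_head G e = ?v}"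
      using xE xy(3) by simp_all
    then show "x = y" unfolding z by simp
  qed
  have img: "pg_head G ` output_edges G = {v \<in> pg_verts G. is_sink G v}"
  proof
    show "pg_head G ` output_edges G \<subseteq> {v \<in> pg_verts G. is_sink G v}"
    proof
      fix v assume "v \<in> pg_head G ` output_edges G"
      then obtain x where x: "x \<in> output_edges G" "v = pg_head G x" by blast
      have xE: "x \<in> pg_edges G" using x(1) by (auto simp: output_edges_def)
      have "outdeg G v = 0" using output_no_out[OF p x(1)] outdeg0[OF p, of v] x(2) by simp
      then show "v \<in> {v \<in> pg_verts G. is_sink G v}" using pop_head[OF p xE] x(2) by (simp add: is_sink_def)
    qed
    show "{v \<in> pg_verts G. is_sink G v} \<subseteq> pg_head G ` output_edges G"
    proof
      fix v assume v: "v \<in> {v \<in> pg_verts G. is_sink G v}"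
      then have "indeg G v = 1" using indeg1 by blast
      then have "indeg G v \<noteq> 0" by simp
      then obtain e where e: "e \<in> pg_edges G" "pg_head G e = v" using indeg0[OF p, of v] by auto
      have "boundary G v" using v pop_ss_deg[OF p, of v] by (simp add: boundary_def)
      then have "e \<in> output_edges G" using e by (simp add: output_edges_def)
      then show "v \<in> pg_head G ` output_edges G" using e(2) by blast
    qed
  qed
  show ?thesis using inj img by (simp add: bij_betw_def)
qed

lemma in_src_bij:
  assumes p: "pop G"
  shows "bij_betw (pg_tail G) (input_edges G) {v \<in> pg_verts G. is_source G v}"
proof -
  have outdeg1: "outdeg G v = 1" if v: "v \<in> pg_verts G" "is_source G v" for v
  proof -
    have "deg G v = 1" using pop_ss_deg[OF p] v(2) by blast
    moreover have "indeg G v = 0" using v(2) by (simp add: is_source_def)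
    ultimately show ?thesis by (simp add: deg_def)
  qed
  have inj: "inj_on (pg_tail G) (input_edges G)"
  proof (rule inj_onI)
    fix x y assume xy: "x \<in> input_edges G" "y \<in> input_edges G" "pg_tail G x = pg_tail G y"
    have xE: "x \<in> pg_edges G" "y \<in> pg_edges G" using xy(1,2) by (auto simp: input_edges_def)
    let ?v = "pg_tail G x"
    have "indeg G ?v = 0" using input_no_in[OF p xy(1)] indeg0[OF p, of ?v] by simp
    then have "is_source G ?v" using pop_tail[OF p xE(1)] by (simp add: is_source_def)
    then have "card {e \<in> pg_edges G. pg_tail G e = ?v} = 1"
      using outdeg1 pop_tail[OF p xE(1)] by (simp add: outdeg_def)
    then obtain z where z: "{e \<in> pg_edges G. pg_tail G e = ?v} = {z}" by (rule card_1_singletonE)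
    have "x \<in> {e \<in> pg_edges G. pg_tail G e = ?v}" "y \<in> {e \<in> pg_edges G. pg_tail G e = ?v}"
      using xE xy(3) by simp_all
    then show "x = y" unfolding z by simp
  qed
  have img: "pg_tail G ` input_edges G = {v \<in> pg_verts G. is_source G v}"
  proof
    show "pg_tail G ` input_edges G \<subseteq> {v \<in> pg_verts G. is_source G v}"
    proof
      fix v assume "v \<in> pg_tail G ` input_edges G"
      then obtain x where x: "x \<in> input_edges G" "v = pg_tail G x" by blast
      have xE: "x \<in> pg_edges G" using x(1) by (auto simp: input_edges_def)
      have "indeg G v = 0" using input_no_in[OF p x(1)] indeg0[OF p, of v] x(2) by simp
      then show "v \<in> {v \<in> pg_verts G. is_source G v}" using pop_tail[OF p xE] x(2) by (simp add: is_source_def)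
    qed
    show "{v \<in> pg_verts G. is_source G v} \<subseteq> pg_tail G ` input_edges G"
    proof
      fix v assume v: "v \<in> {v \<in> pg_verts G. is_source G v}"
      then have "outdeg G v = 1" using outdeg1 by blast
      then have "outdeg G v \<noteq> 0" by simp
      then obtain e where e: "e \<in> pg_edges G" "pg_tail G e = v" using outdeg0[OF p, of v] by auto
      have "boundary G v" using v pop_ss_deg[OF p, of v] by (simp add: boundary_def)
      then have "e \<in> input_edges G" using e by (simp add: input_edges_def)
      then show "v \<in> pg_tail G ` input_edges G" using e(2) by blast
    qed
  qed
  show ?thesis using inj img by (simp add: bij_betw_def)
qed

context p1 begin

lemma pi_T: "x \<in> sinkE K \<Longrightarrow> pi x \<in> output_edges H"
  using pi_image by blast

lemma rank_T_gen:
  assumes xT: "x \<in> sinkE K"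
  shows "nb (pg_ord K) (sinkE K) x = nb (pg_ord H) (output_edges H) (pi x)"
proof -
  have "nb (pg_ord H) (pi ` sinkE K) (pi x) = nb (pg_ord K) (sinkE K) x"
  proof (rule nb_transfer[OF pi_inj _ xT refl])
    show "sinkE K \<subseteq> sinkE K" by simp
    fix y assume y: "y \<in> sinkE K"
    show "(y, x) \<in> pg_ord K \<longleftrightarrow> (pi y, pi x) \<in> pg_ord H"
    proof (cases x)
      case (Inl a)
      then have a: "a \<in> output_edges G" using xT by (auto simp: sinkE_K)
      have aE: "a \<in> pg_edges G" using subsetD[OF out_sub a] .
      show ?thesis
      proof (cases y)
        case (Inl c)
        then have c: "c \<in> output_edges G" using y by (auto simp: sinkE_K)
        have cE: "c \<in> pg_edges G" using subsetD[OF out_sub c] .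
        have 1: "(y, x) \<in> pg_ord K \<longleftrightarrow> (c, a) \<in> pg_ord G" using ord_ll[OF cE aE] Inl \<open>x = Inl a\<close> by simp
        have 2: "pi y = mu c" "pi x = mu a" using Inl \<open>x = Inl a\<close> by (simp_all add: pi_def)
        show ?thesis unfolding 1 2 using mu_less[OF c a] by simp
      next
        case (Inr c)
        then have c: "c \<in> pg_edges H" "c \<notin> input_edges H" using y by (auto simp: sinkE_K)
        show ?thesis using ord_lr(2)[OF a c] Inr \<open>x = Inl a\<close> by (simp add: pi_def)
      qed
    next
      case (Inr b)
      then have b: "b \<in> pg_edges H" "b \<notin> input_edges H" using xT by (auto simp: sinkE_K)
      show ?thesis
      proof (cases y)
        case (Inl a)
        then have a: "a \<in> output_edges G" using y by (auto simp: sinkE_K)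
        show ?thesis using ord_lr(1)[OF a b] Inl Inr by (simp add: pi_def)
      next
        case (Inr c)
        then have c: "c \<in> pg_edges H - input_edges H" using y by (auto simp: sinkE_K)
        show ?thesis using ord_rr[OF c] b \<open>y = Inr c\<close> \<open>x = Inr b\<close> by (simp add: pi_def)
      qed
    qed
  qed
  then show ?thesis using pi_image by simp
qed

end


lemma inl_in_verts: "Inl x \<in> pg_verts (comp B A) \<Longrightarrow> x \<in> pg_verts A \<and> \<not> is_sink A x"
  by (auto simp: comp_verts)
lemma inr_in_verts: "Inr x \<in> pg_verts (comp B A) \<Longrightarrow> x \<in> pg_verts B \<and> \<not> is_source B x"
  by (auto simp: comp_verts)

lemma part1:
  fixes H :: "('vh, 'eh) pgraph" and G1 :: "('v1, 'e1) pgraph" and G2 :: "('v2, 'e2) pgraph"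
  assumes P1: "p1 H G1 h" and P2: "p1 H G2 h" and iso: "pop_iso (comp H G1) (comp H G2)"
  shows "pop_iso G1 G2"
proof -
  interpret P1: p1 H G1 h by fact
  interpret P2: p1 H G2 h by fact
  let ?K1 = "comp H G1" and ?K2 = "comp H G2"
  obtain f g where fb: "bij_betw f (pg_verts ?K1) (pg_verts ?K2)" and gb: "bij_betw g (pg_edges ?K1) (pg_edges ?K2)"
    and inc: "\<forall>e \<in> pg_edges ?K1. pg_tail ?K2 (g e) = f (pg_tail ?K1 e) \<and> pg_head ?K2 (g e) = f (pg_head ?K1 e)"
    and ordi: "\<forall>e1 \<in> pg_edges ?K1. \<forall>e2 \<in> pg_edges ?K1. (e1, e2) \<in> pg_ord ?K1 \<longleftrightarrow> (g e1, g e2) \<in> pg_ord ?K2"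
    using iso unfolding pop_iso_def by blast
  interpret I: isod ?K1 ?K2 f g
    by (unfold_locales) (use fb gb inc ordi P1.K_tail P1.K_head in auto)
  have pG1: "pop G1" and pG2: "pop G2" and pH: "pop H" using P1.pA P2.pA P1.pB by auto
  have fixR: "g (Inr b) = Inr b" if b: "b \<in> pg_edges H" "b \<notin> input_edges H" for b
  proof -
    have bT1: "Inr b \<in> sinkE ?K1" using b by (simp add: P1.sinkE_K)
    have bT2: "Inr b \<in> sinkE ?K2" using b by (simp add: P2.sinkE_K)
    have bE: "Inr b \<in> pg_edges ?K1" using bT1 by (simp add: sinkE_def)
    have yT: "g (Inr b) \<in> sinkE ?K2" using bT1 I.sinkE_img by blast
    have "nb (pg_ord ?K2) (sinkE ?K2) (g (Inr b)) = nb (pg_ord ?K1) (sinkE ?K1) (Inr b)"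
      using I.nb_eq[of "sinkE ?K1" "Inr b"] bE I.sinkE_img by (simp add: sinkE_def)
    also have "\<dots> = nb (pg_ord H) (output_edges H) b" using P1.rank_T[OF b] .
    finally have "nb (pg_ord H) (output_edges H) (P2.pi (g (Inr b))) = nb (pg_ord H) (output_edges H) b"
      using P2.rank_T_gen[OF yT] by simp
    moreover have "b \<in> output_edges H" using P1.noninput_out[OF b] .
    ultimately have "P2.pi (g (Inr b)) = b"
      using nb_inj[OF fin_out[OF pH] pop_trans[OF pH] pop_irrefl[OF pH] pop_total[OF pH] out_sub P2.pi_T[OF yT]] by blast
    then have "P2.pi (g (Inr b)) = P2.pi (Inr b)" by (simp add: P2.pi_def)
    then show ?thesis using inj_onD[OF P2.pi_inj _ yT bT2] by blast
  qed
  have gl: "\<exists>e'\<in>pg_edges G2. g (Inl e) = Inl e'" if e: "e \<in> pg_edges G1" for e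
  proof -
    have eE: "Inl e \<in> pg_edges ?K1" using e by (simp add: comp_edges)
    then have "g (Inl e) \<in> pg_edges ?K2" by (rule I.gE)
    then consider (l) e' where "e' \<in> pg_edges G2" "g (Inl e) = Inl e'"
      | (r) b where "b \<in> pg_edges H" "b \<notin> input_edges H" "g (Inl e) = Inr b"
      by (auto simp: comp_edges)
    then show ?thesis
    proof cases
      case l then show ?thesis by blast
    next
      case r
      have bE: "Inr b \<in> pg_edges ?K1" using r by (simp add: comp_edges)
      have "g (Inl e) = g (Inr b)" using r fixR by simp
      then have "Inl e = Inr b" using inj_onD[OF I.ginj _ eE bE] by blast
      then show ?thesis by simp
    qed
  qed
  define ge where "ge e = (case g (Inl e) of Inl e' \<Rightarrow> e' | Inr _ \<Rightarrow> undefined)" for e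
  have ge: "g (Inl e) = Inl (ge e) \<and> ge e \<in> pg_edges G2" if "e \<in> pg_edges G1" for e
    using gl[OF that] by (auto simp: ge_def)
  have ge_bij: "bij_betw ge (pg_edges G1) (pg_edges G2)"
  proof -
    have inj: "inj_on ge (pg_edges G1)"
    proof (rule inj_onI)
      fix a b assume ab: "a \<in> pg_edges G1" "b \<in> pg_edges G1" "ge a = ge b"
      then have "g (Inl a) = g (Inl b)" using ge by metis
      moreover have "Inl a \<in> pg_edges ?K1" "Inl b \<in> pg_edges ?K1" using ab by (simp_all add: comp_edges)
      ultimately show "a = b" using inj_onD[OF I.ginj] by blast
    qed
    have "ge ` pg_edges G1 = pg_edges G2"
    proof
      show "ge ` pg_edges G1 \<subseteq> pg_edges G2" using ge by blast
      show "pg_edges G2 \<subseteq> ge ` pg_edges G1"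
      proof
        fix e' assume e': "e' \<in> pg_edges G2"
        then have "Inl e' \<in> pg_edges ?K2" by (simp add: comp_edges)
        then obtain y where y: "y \<in> pg_edges ?K1" "g y = Inl e'" using I.gimg by (metis imageE)
        show "e' \<in> ge ` pg_edges G1"
        proof (cases y)
          case (Inl e)
          then have "e \<in> pg_edges G1" using y by (auto simp: comp_edges)
          then show ?thesis using ge[of e] y Inl by force
        next
          case (Inr b)
          then have "b \<in> pg_edges H" "b \<notin> input_edges H" using y by (auto simp: comp_edges)
          then show ?thesis using fixR y Inr by simp
        qed
      qed
    qed
    then show ?thesis using inj by (simp add: bij_betw_def)
  qed
  have fh: "f (Inr h) = Inr h"
  proof -
    obtain b where b: "b \<in> pg_edges H" "pg_tail H b = h" using P1.h_out by blast
    have bn: "b \<notin> input_edges H" using P1.tail_h_noninput[OF b] .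
    have bE: "Inr b \<in> pg_edges ?K1" using b bn by (simp add: comp_edges)
    have "f (pg_tail ?K1 (Inr b)) = pg_tail ?K2 (g (Inr b))" using I.gt[OF bE] by simp
    then show ?thesis using fixR[OF b(1) bn] b(2) by (simp add: comp_tail_r)
  qed
  have nsink_out: "\<exists>e\<in>pg_edges G. pg_tail G e = v" if "pop G" "v \<in> pg_verts G" "\<not> is_sink G v" for G :: "('x,'y) pgraph" and v
    using that outdeg0[OF that(1), of v] by (auto simp: is_sink_def)
  have fr: "\<exists>w'. f (Inr w) = Inr w'" if w: "Inr w \<in> pg_verts ?K1" for w
  proof (cases "w = h")
    case True then show ?thesis using fh by blast
  next
    case False
    have "outdeg ?K1 (Inr w) = 0"
    proof -
      have "\<not>(\<exists>e\<in>pg_edges ?K1. pg_tail ?K1 e = Inr w)"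
      proof
        assume "\<exists>e\<in>pg_edges ?K1. pg_tail ?K1 e = Inr w"
        then obtain e where e: "e \<in> pg_edges ?K1" "pg_tail ?K1 e = Inr w" by blast
        show False
        proof (cases e)
          case (Inl a) then show False using e by (simp add: comp_tail_l)
        next
          case (Inr b)
          then have "b \<in> pg_edges H" "b \<notin> input_edges H" using e by (auto simp: comp_edges)
          then have "pg_tail H b = h" by (rule P1.noninput_tail)
          then show False using e Inr False by (simp add: comp_tail_r)
        qed
      qed
      then show ?thesis using outdeg0f[OF P1.K_fin, of "Inr w"] by simp
    qed
    then have o2: "outdeg ?K2 (f (Inr w)) = 0" using I.outdeg_eq[OF w] by simp
    have fw: "f (Inr w) \<in> pg_verts ?K2" using I.fV[OF w] .
    show ?thesis
    proof (cases "f (Inr w)")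
      case (Inl u)
      then have u: "u \<in> pg_verts G2" "\<not> is_sink G2 u" using fw inl_in_verts by metis+
      obtain e where e: "e \<in> pg_edges G2" "pg_tail G2 e = u" using nsink_out[OF pG2 u] by blast
      then have "Inl e \<in> pg_edges ?K2" "pg_tail ?K2 (Inl e) = f (Inr w)" using Inl by (simp_all add: comp_edges comp_tail_l)
      then have "outdeg ?K2 (f (Inr w)) \<noteq> 0" using outdeg0f[OF P2.K_fin, of "f (Inr w)"] by blast
      with o2 show ?thesis by simp
    next
      case (Inr w') then show ?thesis by blast
    qed
  qed
  let ?NS1 = "{v \<in> pg_verts G1. \<not> is_sink G1 v}" and ?NS2 = "{v \<in> pg_verts G2. \<not> is_sink G2 v}"
  have fl: "\<exists>u\<in>?NS2. f (Inl v) = Inl u" if v: "v \<in> ?NS1" for v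
  proof -
    have vK: "Inl v \<in> pg_verts ?K1" using v by (simp add: comp_verts)
    obtain e where e: "e \<in> pg_edges G1" "pg_tail G1 e = v" using nsink_out[OF pG1] v by blast
    have eE: "Inl e \<in> pg_edges ?K1" using e by (simp add: comp_edges)
    have "f (Inl v) = pg_tail ?K2 (g (Inl e))" using I.gt[OF eE] e(2) by (simp add: comp_tail_l)
    also have "\<dots> = Inl (pg_tail G2 (ge e))" using ge[OF e(1)] by (simp add: comp_tail_l)
    finally have eq: "f (Inl v) = Inl (pg_tail G2 (ge e))" .
    have "f (Inl v) \<in> pg_verts ?K2" using I.fV[OF vK] .
    then have "pg_tail G2 (ge e) \<in> ?NS2" using eq inl_in_verts by fastforce
    then show ?thesis using eq by blast
  qed
  define fv0 where "fv0 v = (case f (Inl v) of Inl u \<Rightarrow> u | Inr _ \<Rightarrow> undefined)" for v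
  have fv0: "f (Inl v) = Inl (fv0 v) \<and> fv0 v \<in> ?NS2" if "v \<in> ?NS1" for v
    using fl[OF that] by (auto simp: fv0_def)
  have fv0_bij: "bij_betw fv0 ?NS1 ?NS2"
  proof -
    have inj: "inj_on fv0 ?NS1"
    proof (rule inj_onI)
      fix a b assume ab: "a \<in> ?NS1" "b \<in> ?NS1" "fv0 a = fv0 b"
      then have "f (Inl a) = f (Inl b)" using fv0 by metis
      moreover have "Inl a \<in> pg_verts ?K1" "Inl b \<in> pg_verts ?K1" using ab by (simp_all add: comp_verts)
      ultimately show "a = b" using inj_onD[OF I.finj] by blast
    qed
    have "fv0 ` ?NS1 = ?NS2"
    proof
      show "fv0 ` ?NS1 \<subseteq> ?NS2" using fv0 by blast
      show "?NS2 \<subseteq> fv0 ` ?NS1"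
      proof
        fix u assume u: "u \<in> ?NS2"
        then have "Inl u \<in> pg_verts ?K2" by (simp add: comp_verts)
        then obtain y where y: "y \<in> pg_verts ?K1" "f y = Inl u" using I.fimg by (metis imageE)
        show "u \<in> fv0 ` ?NS1"
        proof (cases y)
          case (Inl v)
          then have "v \<in> ?NS1" using y inl_in_verts by fastforce
          then show ?thesis using fv0[of v] y Inl by force
        next
          case (Inr w)
          then show ?thesis using fr[of w] y by auto
        qed
      qed
    qed
    then show ?thesis using inj by (simp add: bij_betw_def)
  qed
  have head_no: "ge e \<notin> output_edges G2 \<and> pg_head G2 (ge e) = fv0 (pg_head G1 e) \<and> pg_head G1 e \<in> ?NS1"
    if e: "e \<in> pg_edges G1" "e \<notin> output_edges G1" for e
  proof -
    have eE: "Inl e \<in> pg_edges ?K1" using e by (simp add: comp_edges)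
    have "pg_head ?K1 (Inl e) \<in> pg_verts ?K1" using P1.K_head[OF eE] .
    then have hn: "pg_head G1 e \<in> ?NS1" using e(2) inl_in_verts by (fastforce simp: comp_head_l)
    have "pg_head ?K2 (Inl (ge e)) = f (Inl (pg_head G1 e))" using I.gh[OF eE] ge[OF e(1)] e(2) by (simp add: comp_head_l)
    also have "\<dots> = Inl (fv0 (pg_head G1 e))" using fv0[OF hn] by simp
    finally have eq: "pg_head ?K2 (Inl (ge e)) = Inl (fv0 (pg_head G1 e))" .
    have no: "ge e \<notin> output_edges G2"
    proof
      assume "ge e \<in> output_edges G2"
      then have "pg_head ?K2 (Inl (ge e)) = Inr (pg_head H (P2.mu (ge e)))" by (simp add: comp_head_l)
      with eq show False by simp
    qed
    then have "Inl (pg_head G2 (ge e)) = Inl (fv0 (pg_head G1 e))" using eq by (simp add: comp_head_l)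
    then show ?thesis using no hn by simp
  qed
  have head_o: "ge e \<in> output_edges G2" if e: "e \<in> output_edges G1" for e
  proof -
    have e1: "e \<in> pg_edges G1" using subsetD[OF out_sub e] .
    have eE: "Inl e \<in> pg_edges ?K1" using e1 by (simp add: comp_edges)
    have hv: "pg_head ?K1 (Inl e) \<in> pg_verts ?K1" using P1.K_head[OF eE] .
    have he: "pg_head ?K1 (Inl e) = Inr (pg_head H (P1.mu e))" using e by (simp add: comp_head_l)
    then have "Inr (pg_head H (P1.mu e)) \<in> pg_verts ?K1" using hv by simp
    then obtain w' where w': "f (Inr (pg_head H (P1.mu e))) = Inr w'" using fr by blast
    have hk: "pg_head ?K2 (Inl (ge e)) = Inr w'" using I.gh[OF eE] ge[OF e1] w' he by simp
    show ?thesis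
    proof (rule ccontr)
      assume "ge e \<notin> output_edges G2"
      then have "pg_head ?K2 (Inl (ge e)) = Inl (pg_head G2 (ge e))" by (simp add: comp_head_l)
      with hk show False by simp
    qed
  qed
  have ge_out: "bij_betw ge (output_edges G1) (output_edges G2)"
  proof -
    have inj: "inj_on ge (output_edges G1)" using inj_on_subset[OF bij_betw_imp_inj_on[OF ge_bij] out_sub] .
    have "ge ` output_edges G1 = output_edges G2"
    proof
      show "ge ` output_edges G1 \<subseteq> output_edges G2" using head_o by blast
      show "output_edges G2 \<subseteq> ge ` output_edges G1"
      proof
        fix e' assume e': "e' \<in> output_edges G2"
        have "e' \<in> pg_edges G2" using subsetD[OF out_sub e'] .
        then obtain e where e: "e \<in> pg_edges G1" "e' = ge e" using ge_bij unfolding bij_betw_def by blast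
        have "e \<in> output_edges G1"
        proof (rule ccontr)
          assume "e \<notin> output_edges G1"
          then have "ge e \<notin> output_edges G2" using head_no[OF e(1)] by blast
          then show False using e' e(2) by simp
        qed
        then show "e' \<in> ge ` output_edges G1" using e by blast
      qed
    qed
    then show ?thesis using inj by (simp add: bij_betw_def)
  qed
  let ?S1 = "{v \<in> pg_verts G1. is_sink G1 v}" and ?S2 = "{v \<in> pg_verts G2. is_sink G2 v}"
  define fv where "fv v = (if v \<in> ?NS1 then fv0 v else pg_head G2 (ge (inv_into (output_edges G1) (pg_head G1) v)))" for v
  have sb1: "bij_betw (pg_head G1) (output_edges G1) ?S1" using out_sink_bij[OF pG1] .
  have sb2: "bij_betw (pg_head G2) (output_edges G2) ?S2" using out_sink_bij[OF pG2] .
  have bS: "bij_betw (pg_head G2 \<circ> (ge \<circ> inv_into (output_edges G1) (pg_head G1))) ?S1 ?S2"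
    by (rule bij_betw_trans[OF bij_betw_trans[OF bij_betw_inv_into[OF sb1] ge_out] sb2])
  have bS': "bij_betw fv ?S1 ?S2"
    by (rule bij_betw_cong[THEN iffD1, OF _ bS]) (auto simp: fv_def)
  have bN': "bij_betw fv ?NS1 ?NS2"
    by (rule bij_betw_cong[THEN iffD1, OF _ fv0_bij]) (auto simp: fv_def)
  have fv_bij: "bij_betw fv (pg_verts G1) (pg_verts G2)"
  proof -
    have "bij_betw fv (?NS1 \<union> ?S1) (?NS2 \<union> ?S2)" by (rule bij_betw_combine[OF bN' bS']) blast
    moreover have "?NS1 \<union> ?S1 = pg_verts G1" "?NS2 \<union> ?S2 = pg_verts G2" by blast+
    ultimately show ?thesis by simp
  qed
  have tl: "pg_tail G2 (ge e) = fv (pg_tail G1 e)" if e: "e \<in> pg_edges G1" for e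
  proof -
    have tn: "pg_tail G1 e \<in> ?NS1"
      using pop_tail[OF pG1 e] outdeg0[OF pG1, of "pg_tail G1 e"] e by (auto simp: is_sink_def)
    have eE: "Inl e \<in> pg_edges ?K1" using e by (simp add: comp_edges)
    have "Inl (pg_tail G2 (ge e)) = f (Inl (pg_tail G1 e))" using I.gt[OF eE] ge[OF e] by (simp add: comp_tail_l)
    also have "\<dots> = Inl (fv0 (pg_tail G1 e))" using fv0[OF tn] by simp
    finally show ?thesis using tn by (simp add: fv_def)
  qed
  have hd: "pg_head G2 (ge e) = fv (pg_head G1 e)" if e: "e \<in> pg_edges G1" for e
  proof (cases "e \<in> output_edges G1")
    case True
    have "pg_head G1 e \<in> ?S1" using sb1 True unfolding bij_betw_def by blast
    then have nin: "pg_head G1 e \<notin> ?NS1" by blast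
    have inv: "inv_into (output_edges G1) (pg_head G1) (pg_head G1 e) = e"
      using inv_into_f_f[OF bij_betw_imp_inj_on[OF sb1] True] .
    have "fv (pg_head G1 e) = pg_head G2 (ge (inv_into (output_edges G1) (pg_head G1) (pg_head G1 e)))"
      unfolding fv_def by (rule if_not_P[OF nin])
    then show ?thesis using inv by simp
  next
    case False
    then show ?thesis using head_no[OF e False] by (simp add: fv_def)
  qed
  have od: "(a, b) \<in> pg_ord G1 \<longleftrightarrow> (ge a, ge b) \<in> pg_ord G2" if ab: "a \<in> pg_edges G1" "b \<in> pg_edges G1" for a b
  proof -
    have aE: "Inl a \<in> pg_edges ?K1" "Inl b \<in> pg_edges ?K1" using ab by (simp_all add: comp_edges)
    have "(a, b) \<in> pg_ord G1 \<longleftrightarrow> (Inl a, Inl b) \<in> pg_ord ?K1" using P1.ord_ll[OF ab] by simp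
    also have "\<dots> \<longleftrightarrow> (g (Inl a), g (Inl b)) \<in> pg_ord ?K2" using I.go[OF aE] .
    also have "\<dots> \<longleftrightarrow> (Inl (ge a), Inl (ge b)) \<in> pg_ord ?K2" using ge[OF ab(1)] ge[OF ab(2)] by simp
    also have "\<dots> \<longleftrightarrow> (ge a, ge b) \<in> pg_ord G2" using P2.ord_ll ge[OF ab(1)] ge[OF ab(2)] by blast
    finally show ?thesis .
  qed
  show ?thesis unfolding pop_iso_def
  proof (intro exI conjI ballI)
    show "bij_betw fv (pg_verts G1) (pg_verts G2)" by (rule fv_bij)
    show "bij_betw ge (pg_edges G1) (pg_edges G2)" by (rule ge_bij)
    fix e assume "e \<in> pg_edges G1"
    then show "pg_tail G2 (ge e) = fv (pg_tail G1 e)" "pg_head G2 (ge e) = fv (pg_head G1 e)"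
      using tl hd by blast+
  next
    fix a b assume "a \<in> pg_edges G1" "b \<in> pg_edges G1"
    then show "(a, b) \<in> pg_ord G1 \<longleftrightarrow> (ge a, ge b) \<in> pg_ord G2" by (rule od)
  qed
qed


context p2 begin

definition tau :: "'eg \<Rightarrow> 'eh + 'eg" where
  "tau a = (if a \<in> input_edges G then Inl (inv_into (output_edges H) mu a) else Inr a)"

lemma mu_inv: "a \<in> input_edges G \<Longrightarrow> inv_into (output_edges H) mu a \<in> output_edges H \<and> mu (inv_into (output_edges H) mu a) = a"
proof -
  assume a: "a \<in> input_edges G"
  have "a \<in> mu ` output_edges H" using mu_bij a unfolding bij_betw_def by simp
  then show ?thesis using inv_into_into[of a mu "output_edges H"] f_inv_into_f[of a mu "output_edges H"] by simp
qed

lemma ord_tau: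
  assumes a: "a \<in> pg_edges G" and b: "b \<in> pg_edges G"
  shows "(a, b) \<in> pg_ord G \<longleftrightarrow> (tau a, tau b) \<in> pg_ord K"
proof (cases "a \<in> input_edges G")
  case aT: True
  define oa where "oa = inv_into (output_edges H) mu a"
  have oa: "oa \<in> output_edges H" "mu oa = a" "tau a = Inl oa"
    using mu_inv[OF aT] aT unfolding oa_def tau_def by simp_all
  show ?thesis
  proof (cases "b \<in> input_edges G")
    case bT: True
    define ob where "ob = inv_into (output_edges H) mu b"
    have ob: "ob \<in> output_edges H" "mu ob = b" "tau b = Inl ob"
      using mu_inv[OF bT] bT unfolding ob_def tau_def by simp_all
    have 1: "(a, b) \<in> pg_ord G \<longleftrightarrow> (oa, ob) \<in> pg_ord H" using mu_less[OF oa(1) ob(1)] oa(2) ob(2) by simp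
    have 2: "(Inl oa, Inl ob) \<in> pg_ord K \<longleftrightarrow> (oa, ob) \<in> pg_ord H"
      using ord_ll[OF subsetD[OF out_sub oa(1)] subsetD[OF out_sub ob(1)]] .
    show ?thesis using 1 2 oa(3) ob(3) by simp
  next
    case bF: False
    then have tb: "tau b = Inr b" by (simp add: tau_def)
    show ?thesis using ord_lr(1)[OF oa(1) b bF] oa(2,3) tb by simp
  qed
next
  case aF: False
  then have ta: "tau a = Inr a" by (simp add: tau_def)
  show ?thesis
  proof (cases "b \<in> input_edges G")
    case bT: True
    define ob where "ob = inv_into (output_edges H) mu b"
    have ob: "ob \<in> output_edges H" "mu ob = b" "tau b = Inl ob"
      using mu_inv[OF bT] bT unfolding ob_def tau_def by simp_all
    show ?thesis using ord_lr(2)[OF ob(1) a aF] ob(2,3) ta by simp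
  next
    case bF: False
    then have tb: "tau b = Inr b" by (simp add: tau_def)
    have "a \<in> pg_edges G - input_edges G" "b \<in> pg_edges G - input_edges G" using a b aF bF by simp_all
    then show ?thesis using ord_rr ta tb by simp
  qed
qed

lemma tau_E: "a \<in> pg_edges G \<Longrightarrow> tau a \<in> pg_edges K"
proof -
  assume a: "a \<in> pg_edges G"
  show ?thesis
  proof (cases "a \<in> input_edges G")
    case True
    then have "inv_into (output_edges H) mu a \<in> pg_edges H" using subsetD[OF out_sub conjunct1[OF mu_inv[OF True]]] by simp
    then show ?thesis using True by (simp add: tau_def comp_edges)
  next
    case False then show ?thesis using a by (simp add: tau_def comp_edges)
  qed
qed

end

lemma part2:
  fixes H :: "('vh, 'eh) pgraph" and G1 :: "('v1, 'e1) pgraph" and G2 :: "('v2, 'e2) pgraph"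
  assumes P1: "p2 H G1 h" and P2: "p2 H G2 h" and iso: "pop_iso (comp G1 H) (comp G2 H)"
  shows "pop_iso G1 G2"
proof -
  interpret P1: p2 H G1 h by fact
  interpret P2: p2 H G2 h by fact
  let ?K1 = "comp G1 H" and ?K2 = "comp G2 H"
  obtain f g where fb: "bij_betw f (pg_verts ?K1) (pg_verts ?K2)" and gb: "bij_betw g (pg_edges ?K1) (pg_edges ?K2)"
    and inc: "\<forall>e \<in> pg_edges ?K1. pg_tail ?K2 (g e) = f (pg_tail ?K1 e) \<and> pg_head ?K2 (g e) = f (pg_head ?K1 e)"
    and ordi: "\<forall>e1 \<in> pg_edges ?K1. \<forall>e2 \<in> pg_edges ?K1. (e1, e2) \<in> pg_ord ?K1 \<longleftrightarrow> (g e1, g e2) \<in> pg_ord ?K2"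
    using iso unfolding pop_iso_def by blast
  interpret I: isod ?K1 ?K2 f g
    by (unfold_locales) (use fb gb inc ordi P1.K_tail P1.K_head in auto)
  have pG1: "pop G1" and pG2: "pop G2" and pH: "pop H" using P1.pB P2.pB P1.pA by auto
  have fixI: "g (Inl i) = Inl i" if i: "i \<in> input_edges H" for i
  proof -
    have iS1: "Inl i \<in> srcE ?K1" using i by (simp add: P1.srcE_K)
    have iE: "Inl i \<in> pg_edges ?K1" using iS1 by (simp add: srcE_def)
    have "g (Inl i) \<in> srcE ?K2" using iS1 I.srcE_img by blast
    then obtain i' where i': "i' \<in> input_edges H" "g (Inl i) = Inl i'" by (auto simp: P2.srcE_K)
    have "nb (pg_ord ?K2) (srcE ?K2) (g (Inl i)) = nb (pg_ord ?K1) (srcE ?K1) (Inl i)"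
      using I.nb_eq[of "srcE ?K1" "Inl i"] iE I.srcE_img by (simp add: srcE_def)
    also have "\<dots> = nb (pg_ord H) (input_edges H) i" using P1.rank_S[OF i] .
    finally have "nb (pg_ord H) (input_edges H) i' = nb (pg_ord H) (input_edges H) i"
      using P2.rank_S[OF i'(1)] i'(2) by simp
    then have "i' = i"
      using nb_inj[OF fin_in[OF pH] pop_trans[OF pH] pop_irrefl[OF pH] pop_total[OF pH] in_sub i'(1) i] by blast
    then show ?thesis using i' by simp
  qed
  have fh: "f (Inl h) = Inl h"
  proof -
    obtain a where a: "a \<in> pg_edges H" "pg_head H a = h" using P1.h_in by blast
    have ai: "a \<in> input_edges H"
    proof (rule ccontr)
      assume "a \<notin> input_edges H"
      then have "pg_tail H a = h" using P1.noninput_tail[OF a(1)] by blast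
      then show False using pop_noloop[OF pH a(1)] a(2) by simp
    qed
    have ao: "a \<notin> output_edges H" using P1.head_h_nonoutput[OF a] .
    have aE: "Inl a \<in> pg_edges ?K1" using a by (simp add: comp_edges)
    have "pg_head ?K2 (g (Inl a)) = f (pg_head ?K1 (Inl a))" using I.gh[OF aE] .
    then show ?thesis using fixI[OF ai] ao a(2) by (simp add: comp_head_l)
  qed
  have hK: "Inl h \<in> pg_verts ?K1"
  proof -
    obtain b where b: "b \<in> pg_edges H" "pg_tail H b = h" using P1.h_out by blast
    have "Inl b \<in> pg_edges ?K1" using b by (simp add: comp_edges)
    then show ?thesis using P1.K_tail b(2) by (fastforce simp: comp_tail_l)
  qed
  have fixD: "g (Inl b) = Inl b" if b: "b \<in> pg_edges H" "pg_tail H b = h" for b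
  proof -
    let ?Bh = "{b \<in> pg_edges H. pg_tail H b = h}"
    let ?D1 = "{x \<in> pg_edges ?K1. pg_tail ?K1 x = Inl h}" and ?D2 = "{x \<in> pg_edges ?K2. pg_tail ?K2 x = Inl h}"
    have gD: "g ` ?D1 = ?D2" using I.tailset[OF hK] fh by simp
    have bD: "Inl b \<in> ?D1" using b by (simp add: comp_edges comp_tail_l)
    then have "g (Inl b) \<in> ?D2" using gD by blast
    then obtain b' where b': "b' \<in> ?Bh" "g (Inl b) = Inl b'" using P2.Dset by auto
    have "nb (pg_ord ?K2) ?D2 (g (Inl b)) = nb (pg_ord ?K1) ?D1 (Inl b)"
      using I.nb_eq[of ?D1 "Inl b"] bD gD by simp
    also have "\<dots> = nb (pg_ord H) ?Bh b" using P1.rank_D[OF b] .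
    finally have "nb (pg_ord H) ?Bh b' = nb (pg_ord H) ?Bh b"
      using P2.rank_D[of b'] b' by simp
    moreover have "finite ?Bh" using pop_fin(1)[OF pH] by simp
    ultimately have "b' = b"
      using nb_inj[of ?Bh "pg_ord H" "pg_edges H" b' b] pop_trans[OF pH] pop_irrefl[OF pH] pop_total[OF pH] b' b by blast
    then show ?thesis using b' by simp
  qed
  have fixL: "g (Inl x) = Inl x" if x: "x \<in> pg_edges H" for x
  proof (cases "x \<in> input_edges H")
    case True then show ?thesis by (rule fixI)
  next
    case False show ?thesis using fixD[OF x P1.noninput_tail[OF x False]] .
  qed
  have gr: "\<exists>e'\<in>pg_edges G2 - input_edges G2. g (Inr e) = Inr e'" if e: "e \<in> pg_edges G1" "e \<notin> input_edges G1" for e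
  proof -
    have eE: "Inr e \<in> pg_edges ?K1" using e by (simp add: comp_edges)
    then have "g (Inr e) \<in> pg_edges ?K2" by (rule I.gE)
    then consider (l) x where "x \<in> pg_edges H" "g (Inr e) = Inl x"
      | (r) e' where "e' \<in> pg_edges G2 - input_edges G2" "g (Inr e) = Inr e'"
      by (auto simp: comp_edges)
    then show ?thesis
    proof cases
      case r then show ?thesis by blast
    next
      case l
      have xE: "Inl x \<in> pg_edges ?K1" using l by (simp add: comp_edges)
      have "g (Inr e) = g (Inl x)" using l fixL by simp
      then have "Inr e = Inl x" using inj_onD[OF I.ginj _ eE xE] by blast
      then show ?thesis by simp
    qed
  qed
  define ge0 where "ge0 e = (case g (Inr e) of Inr e' \<Rightarrow> e' | Inl _ \<Rightarrow> undefined)" for e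
  have ge0: "g (Inr e) = Inr (ge0 e) \<and> ge0 e \<in> pg_edges G2 - input_edges G2"
    if ee: "e \<in> pg_edges G1 - input_edges G1" for e
  proof -
    obtain e' where "e' \<in> pg_edges G2 - input_edges G2" "g (Inr e) = Inr e'" using gr[of e] ee by blast
    then show ?thesis by (simp add: ge0_def)
  qed
  have ge0_bij: "bij_betw ge0 (pg_edges G1 - input_edges G1) (pg_edges G2 - input_edges G2)"
  proof -
    have inj: "inj_on ge0 (pg_edges G1 - input_edges G1)"
    proof (rule inj_onI)
      fix a b assume ab: "a \<in> pg_edges G1 - input_edges G1" "b \<in> pg_edges G1 - input_edges G1" "ge0 a = ge0 b"
      then have "g (Inr a) = g (Inr b)" using ge0 by metis
      moreover have "Inr a \<in> pg_edges ?K1" "Inr b \<in> pg_edges ?K1" using ab by (simp_all add: comp_edges)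
      ultimately show "a = b" using inj_onD[OF I.ginj] by blast
    qed
    have "ge0 ` (pg_edges G1 - input_edges G1) = pg_edges G2 - input_edges G2"
    proof
      show "ge0 ` (pg_edges G1 - input_edges G1) \<subseteq> pg_edges G2 - input_edges G2" using ge0 by blast
      show "pg_edges G2 - input_edges G2 \<subseteq> ge0 ` (pg_edges G1 - input_edges G1)"
      proof
        fix e' assume e': "e' \<in> pg_edges G2 - input_edges G2"
        then have "Inr e' \<in> pg_edges ?K2" by (simp add: comp_edges)
        then obtain y where y: "y \<in> pg_edges ?K1" "g y = Inr e'" using I.gimg by (metis imageE)
        show "e' \<in> ge0 ` (pg_edges G1 - input_edges G1)"
        proof (cases y)
          case (Inr e)
          then have "e \<in> pg_edges G1 - input_edges G1" using y by (auto simp: comp_edges)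
          then show ?thesis using ge0[of e] y Inr by force
        next
          case (Inl x)
          then have "x \<in> pg_edges H" using y by (auto simp: comp_edges)
          then show ?thesis using fixL y Inl by simp
        qed
      qed
    qed
    then show ?thesis using inj by (simp add: bij_betw_def)
  qed
  define ge where "ge e = (if e \<in> input_edges G1 then P2.mu (inv_into (output_edges H) P1.mu e) else ge0 e)" for e
  have bI: "bij_betw (P2.mu \<circ> inv_into (output_edges H) P1.mu) (input_edges G1) (input_edges G2)"
    by (rule bij_betw_trans[OF bij_betw_inv_into[OF P1.mu_bij] P2.mu_bij])
  have bI': "bij_betw ge (input_edges G1) (input_edges G2)"
    by (rule bij_betw_cong[THEN iffD1, OF _ bI]) (auto simp: ge_def)
  have bN': "bij_betw ge (pg_edges G1 - input_edges G1) (pg_edges G2 - input_edges G2)"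
    by (rule bij_betw_cong[THEN iffD1, OF _ ge0_bij]) (auto simp: ge_def)
  have ge_bij: "bij_betw ge (pg_edges G1) (pg_edges G2)"
  proof -
    have "bij_betw ge (input_edges G1 \<union> (pg_edges G1 - input_edges G1)) (input_edges G2 \<union> (pg_edges G2 - input_edges G2))"
      by (rule bij_betw_combine[OF bI' bN']) blast
    moreover have "input_edges G1 \<union> (pg_edges G1 - input_edges G1) = pg_edges G1"
      using in_sub[of G1] by blast
    moreover have "input_edges G2 \<union> (pg_edges G2 - input_edges G2) = pg_edges G2"
      using in_sub[of G2] by blast
    ultimately show ?thesis by simp
  qed
  have gtau: "g (P1.tau a) = P2.tau (ge a)" if a: "a \<in> pg_edges G1" for a
  proof (cases "a \<in> input_edges G1")
    case True
    define oa where "oa = inv_into (output_edges H) P1.mu a"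
    have oa: "oa \<in> output_edges H" "P1.mu oa = a" "P1.tau a = Inl oa"
      using P1.mu_inv[OF True] True unfolding oa_def P1.tau_def by simp_all
    have "inv_into (output_edges H) P1.mu a = oa" by (simp add: oa_def)
    then have gea: "ge a = P2.mu oa" using True by (simp add: ge_def)
    have "P2.mu oa \<in> input_edges G2" using P2.mu_in[OF oa(1)] .
    moreover have "inv_into (output_edges H) P2.mu (P2.mu oa) = oa"
      using inv_into_f_f[OF P2.mu_inj oa(1)] .
    ultimately have "P2.tau (ge a) = Inl oa" using gea by (simp add: P2.tau_def)
    moreover have "g (Inl oa) = Inl oa" using fixL subsetD[OF out_sub oa(1)] by blast
    ultimately show ?thesis using oa(3) by simp
  next
    case False
    have a': "a \<in> pg_edges G1 - input_edges G1" using a False by simp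
    have "ge a = ge0 a" using False by (simp add: ge_def)
    then show ?thesis using ge0[OF a'] False by (simp add: P1.tau_def P2.tau_def)
  qed
  have nsink_out: "\<exists>e\<in>pg_edges G. pg_tail G e = v" if "pop G" "v \<in> pg_verts G" "\<not> is_sink G v" for G :: "('x,'y) pgraph" and v
    using that outdeg0[OF that(1), of v] by (auto simp: is_sink_def)
  have fL: "f (Inl v) = Inl v" if v: "v \<in> pg_verts H" "\<not> is_sink H v" for v
  proof -
    obtain x where x: "x \<in> pg_edges H" "pg_tail H x = v" using nsink_out[OF pH v] by blast
    have xE: "Inl x \<in> pg_edges ?K1" using x by (simp add: comp_edges)
    have "pg_tail ?K2 (g (Inl x)) = f (pg_tail ?K1 (Inl x))" using I.gt[OF xE] .
    then show ?thesis using fixL[OF x(1)] x(2) by (simp add: comp_tail_l)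
  qed
  let ?N1 = "{v \<in> pg_verts G1. \<not> is_source G1 v}" and ?N2 = "{v \<in> pg_verts G2. \<not> is_source G2 v}"
  have fR: "\<exists>u\<in>?N2. f (Inr w) = Inr u" if w: "w \<in> ?N1" for w
  proof -
    have wK: "Inr w \<in> pg_verts ?K1" using w by (simp add: comp_verts)
    have fw: "f (Inr w) \<in> pg_verts ?K2" using I.fV[OF wK] .
    show ?thesis
    proof (cases "f (Inr w)")
      case (Inl v)
      then have v: "v \<in> pg_verts H" "\<not> is_sink H v" using fw inl_in_verts by metis+
      have vK: "Inl v \<in> pg_verts ?K1" using v by (simp add: comp_verts)
      have "f (Inr w) = f (Inl v)" using Inl fL[OF v] by simp
      then have "Inr w = Inl v" using inj_onD[OF I.finj _ wK vK] by blast
      then show ?thesis by simp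
    next
      case (Inr u)
      then have "u \<in> ?N2" using fw inr_in_verts by fastforce
      then show ?thesis using Inr by blast
    qed
  qed
  define fv0 where "fv0 v = (case f (Inr v) of Inr u \<Rightarrow> u | Inl _ \<Rightarrow> undefined)" for v
  have fv0: "f (Inr v) = Inr (fv0 v) \<and> fv0 v \<in> ?N2" if "v \<in> ?N1" for v
    using fR[OF that] by (auto simp: fv0_def)
  have fv0_bij: "bij_betw fv0 ?N1 ?N2"
  proof -
    have inj: "inj_on fv0 ?N1"
    proof (rule inj_onI)
      fix a b assume ab: "a \<in> ?N1" "b \<in> ?N1" "fv0 a = fv0 b"
      then have "f (Inr a) = f (Inr b)" using fv0 by metis
      moreover have "Inr a \<in> pg_verts ?K1" "Inr b \<in> pg_verts ?K1" using ab by (simp_all add: comp_verts)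
      ultimately show "a = b" using inj_onD[OF I.finj] by blast
    qed
    have "fv0 ` ?N1 = ?N2"
    proof
      show "fv0 ` ?N1 \<subseteq> ?N2" using fv0 by blast
      show "?N2 \<subseteq> fv0 ` ?N1"
      proof
        fix u assume u: "u \<in> ?N2"
        then have "Inr u \<in> pg_verts ?K2" by (simp add: comp_verts)
        then obtain y where y: "y \<in> pg_verts ?K1" "f y = Inr u" using I.fimg by (metis imageE)
        show "u \<in> fv0 ` ?N1"
        proof (cases y)
          case (Inr v)
          then have "v \<in> ?N1" using y inr_in_verts by fastforce
          then show ?thesis using fv0[of v] y Inr by force
        next
          case (Inl v)
          then have "v \<in> pg_verts H" "\<not> is_sink H v" using y inl_in_verts by metis+
          then show ?thesis using fL y Inl by simp
        qed
      qed
    qed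
    then show ?thesis using inj by (simp add: bij_betw_def)
  qed
  let ?S1 = "{v \<in> pg_verts G1. is_source G1 v}" and ?S2 = "{v \<in> pg_verts G2. is_source G2 v}"
  define fv where "fv v = (if v \<in> ?N1 then fv0 v else pg_tail G2 (ge (inv_into (input_edges G1) (pg_tail G1) v)))" for v
  have sb1: "bij_betw (pg_tail G1) (input_edges G1) ?S1" using in_src_bij[OF pG1] .
  have sb2: "bij_betw (pg_tail G2) (input_edges G2) ?S2" using in_src_bij[OF pG2] .
  have bS: "bij_betw (pg_tail G2 \<circ> (ge \<circ> inv_into (input_edges G1) (pg_tail G1))) ?S1 ?S2"
    by (rule bij_betw_trans[OF bij_betw_trans[OF bij_betw_inv_into[OF sb1] bI'] sb2])
  have bS': "bij_betw fv ?S1 ?S2"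
    by (rule bij_betw_cong[THEN iffD1, OF _ bS]) (auto simp: fv_def)
  have bNv: "bij_betw fv ?N1 ?N2"
    by (rule bij_betw_cong[THEN iffD1, OF _ fv0_bij]) (auto simp: fv_def)
  have fv_bij: "bij_betw fv (pg_verts G1) (pg_verts G2)"
  proof -
    have "bij_betw fv (?N1 \<union> ?S1) (?N2 \<union> ?S2)" by (rule bij_betw_combine[OF bNv bS']) blast
    moreover have "?N1 \<union> ?S1 = pg_verts G1" "?N2 \<union> ?S2 = pg_verts G2" by blast+
    ultimately show ?thesis by simp
  qed
  have headN: "pg_head G1 e \<in> ?N1" if e: "e \<in> pg_edges G1" for e
    using pop_head[OF pG1 e] indeg0[OF pG1, of "pg_head G1 e"] e by (auto simp: is_source_def)
  have hd: "pg_head G2 (ge e) = fv (pg_head G1 e)" if e: "e \<in> pg_edges G1" for e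
  proof (cases "e \<in> input_edges G1")
    case True
    define oa where "oa = inv_into (output_edges H) P1.mu e"
    have oa: "oa \<in> output_edges H" "P1.mu oa = e"
      using P1.mu_inv[OF True] unfolding oa_def by simp_all
    have "inv_into (output_edges H) P1.mu e = oa" by (simp add: oa_def)
    then have gea: "ge e = P2.mu oa" using True by (simp add: ge_def)
    have oE: "Inl oa \<in> pg_edges ?K1" using subsetD[OF out_sub oa(1)] by (simp add: comp_edges)
    have "pg_head ?K2 (g (Inl oa)) = f (pg_head ?K1 (Inl oa))" using I.gh[OF oE] .
    then have "Inr (pg_head G2 (P2.mu oa)) = f (Inr (pg_head G1 e))"
      using fixL[OF subsetD[OF out_sub oa(1)]] oa by (simp add: comp_head_l)
    also have "\<dots> = Inr (fv0 (pg_head G1 e))" using fv0[OF headN[OF e]] by simp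
    finally show ?thesis using gea headN[OF e] by (simp add: fv_def)
  next
    case False
    have e': "e \<in> pg_edges G1 - input_edges G1" using e False by simp
    have eE: "Inr e \<in> pg_edges ?K1" using e' by (simp add: comp_edges)
    have "Inr (pg_head G2 (ge0 e)) = f (Inr (pg_head G1 e))" using I.gh[OF eE] ge0[OF e'] by (simp add: comp_head_r)
    also have "\<dots> = Inr (fv0 (pg_head G1 e))" using fv0[OF headN[OF e]] by simp
    finally show ?thesis using False headN[OF e] by (simp add: fv_def ge_def)
  qed
  have tl: "pg_tail G2 (ge e) = fv (pg_tail G1 e)" if e: "e \<in> pg_edges G1" for e
  proof (cases "e \<in> input_edges G1")
    case True
    have "pg_tail G1 e \<in> ?S1" using sb1 True unfolding bij_betw_def by blast
    then have nin: "pg_tail G1 e \<notin> ?N1" by blast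
    have inv: "inv_into (input_edges G1) (pg_tail G1) (pg_tail G1 e) = e"
      using inv_into_f_f[OF bij_betw_imp_inj_on[OF sb1] True] .
    have "fv (pg_tail G1 e) = pg_tail G2 (ge (inv_into (input_edges G1) (pg_tail G1) (pg_tail G1 e)))"
      unfolding fv_def by (rule if_not_P[OF nin])
    then show ?thesis using inv by simp
  next
    case False
    have e': "e \<in> pg_edges G1 - input_edges G1" using e False by simp
    have tN: "pg_tail G1 e \<in> ?N1"
    proof -
      have "\<not> is_source G1 (pg_tail G1 e)"
      proof
        assume "is_source G1 (pg_tail G1 e)"
        then have "boundary G1 (pg_tail G1 e)" using pop_ss_deg[OF pG1] by (simp add: boundary_def is_source_def)
        then show False using e False by (simp add: input_edges_def)
      qed
      then show ?thesis using pop_tail[OF pG1 e] by simp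
    qed
    have eE: "Inr e \<in> pg_edges ?K1" using e' by (simp add: comp_edges)
    have "Inr (pg_tail G2 (ge0 e)) = f (Inr (pg_tail G1 e))" using I.gt[OF eE] ge0[OF e'] by (simp add: comp_tail_r)
    also have "\<dots> = Inr (fv0 (pg_tail G1 e))" using fv0[OF tN] by simp
    finally show ?thesis using False tN by (simp add: fv_def ge_def)
  qed
  have od: "(a, b) \<in> pg_ord G1 \<longleftrightarrow> (ge a, ge b) \<in> pg_ord G2" if ab: "a \<in> pg_edges G1" "b \<in> pg_edges G1" for a b
  proof -
    have ga: "ge a \<in> pg_edges G2" "ge b \<in> pg_edges G2" using ge_bij ab unfolding bij_betw_def by blast+
    have "(a, b) \<in> pg_ord G1 \<longleftrightarrow> (P1.tau a, P1.tau b) \<in> pg_ord ?K1" using P1.ord_tau[OF ab] .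
    also have "\<dots> \<longleftrightarrow> (g (P1.tau a), g (P1.tau b)) \<in> pg_ord ?K2" using I.go[OF P1.tau_E[OF ab(1)] P1.tau_E[OF ab(2)]] .
    also have "\<dots> \<longleftrightarrow> (P2.tau (ge a), P2.tau (ge b)) \<in> pg_ord ?K2" using gtau[OF ab(1)] gtau[OF ab(2)] by simp
    also have "\<dots> \<longleftrightarrow> (ge a, ge b) \<in> pg_ord G2" using P2.ord_tau[OF ga] by simp
    finally show ?thesis .
  qed
  show ?thesis unfolding pop_iso_def
  proof (intro exI conjI ballI)
    show "bij_betw fv (pg_verts G1) (pg_verts G2)" by (rule fv_bij)
    show "bij_betw ge (pg_edges G1) (pg_edges G2)" by (rule ge_bij)
    fix e assume "e \<in> pg_edges G1"
    then show "pg_tail G2 (ge e) = fv (pg_tail G1 e)" "pg_head G2 (ge e) = fv (pg_head G1 e)"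
      using tl hd by blast+
  next
    fix a b assume "a \<in> pg_edges G1" "b \<in> pg_edges G1"
    then show "(a, b) \<in> pg_ord G1 \<longleftrightarrow> (ge a, ge b) \<in> pg_ord G2" by (rule od)
  qed
qed


theorem lemma3p6:
  fixes H :: "('vh, 'eh) pgraph" and G1 :: "('v1, 'e1) pgraph" and G2 :: "('v2, 'e2) pgraph"
  assumes "pop H" and "elementary H" and "card {v \<in> pg_verts H. internal H v} = 1"
    and "pop G1" and "pop G2"
  shows "(comp_defined H G1 \<and> comp_defined H G2 \<and> pop_iso (comp H G1) (comp H G2)
            \<longrightarrow> pop_iso G1 G2)
       \<and> (comp_defined G1 H \<and> comp_defined G2 H \<and> pop_iso (comp G1 H) (comp G2 H)
            \<longrightarrow> pop_iso G1 G2)"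
proof -
  obtain h where hs: "{v \<in> pg_verts H. internal H v} = {h}" using assms(3) by (rule card_1_singletonE)
  have hH: "hh H h"
  proof
    show "pop H" by fact
    show "h \<in> pg_verts H" using hs by blast
    have "internal H h" using hs by blast
    then show "\<not> boundary H h" by (simp add: internal_def boundary_def)
    fix v assume "v \<in> pg_verts H" "\<not> boundary H v"
    then have "v \<in> {v \<in> pg_verts H. internal H v}" by (simp add: internal_def boundary_def)
    then show "v = h" using hs by blast
  qed
  show ?thesis
  proof (intro conjI impI)
    assume c: "comp_defined H G1 \<and> comp_defined H G2 \<and> pop_iso (comp H G1) (comp H G2)"
    have q1: "p1 H G1 h" unfolding p1_def
      using c hH assms(1,4) by (simp add: cs_def comp_defined_def)
    have q2: "p1 H G2 h" unfolding p1_def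
      using c hH assms(1,5) by (simp add: cs_def comp_defined_def)
    show "pop_iso G1 G2" by (rule part1[OF q1 q2 conjunct2[OF conjunct2[OF c]]])
  next
    assume c: "comp_defined G1 H \<and> comp_defined G2 H \<and> pop_iso (comp G1 H) (comp G2 H)"
    have q1: "p2 H G1 h" unfolding p2_def
      using c hH assms(1,4) by (simp add: cs_def comp_defined_def)
    have q2: "p2 H G2 h" unfolding p2_def
      using c hH assms(1,5) by (simp add: cs_def comp_defined_def)
    show "pop_iso G1 G2" by (rule part2[OF q1 q2 conjunct2[OF conjunct2[OF c]]])
  qed
qed

end
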